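(* Let $m\geq1$, $N\in(\mathbb{N}^* )^m$, let $A\subseteq\mathcal{Z}^m$ be a largely continuous precell mod $N$, $X=\widehat A$ its socle, $(\mu,\nu,\rho)$ a largely continuous presentation of $A$, and $f$ a largely continuous affine map on $A$ such that $\bar f=+\infty$ on $\partial A$. Let $(\alpha_i)_{1\leq i\leq m}\in\mathbb{Q}^m$ and $\beta\in\mathcal{Q}$ be such that $f(a)=\beta+\sum_{1\leq i\leq m}\alpha_ia_i$ on $A$, and extend $f$ to $\mathcal{Q}^m$ by this expression. For every $x\in X$ let $\hat f(x)=f(x,\mu(x))$ if $\alpha_m\geq0$, and $\hat f(x)=f(x,\nu(x))$ otherwise. Then $\hat f$ is a well-defined largely continuous affine map on $X$ with limit $+\infty$ at every point of $\partial X$, and $\min f(A)-|\alpha_m|N_m\leq\hat f(\widehat a)\leq f(a)$ for every $a\in A$.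
   Context: $\mathcal{Z}$ is a $\mathbb{Z}$-group (linearly ordered abelian group with smallest positive element $1$, $|\mathcal{Z}/n\mathcal{Z}|=n$ for all $n\geq1$), $\mathcal{Q}$ its divisible hull ($\mathbb{Q}\subseteq\mathcal{Q}$), $\Gamma=\mathcal{Z}\cup\{+\infty\}$, $\Omega=\mathcal{Q}\cup\{+\infty\}$, $+\infty$ maximal and absorbing for $+$; $|a|=\max(a,-a)$. Topology on $\Omega$ generated by open intervals and $]a,+\infty]$; product topology on $\Omega^m$; $\overline A$ closure; frontier $\partial A$ = closure of $\overline A\setminus A$. Socle $\widehat a=(a_1,\dots,a_{m-1})$, $\widehat A$; $\widehat N=(N_1,\dots,N_{m-1})$. $F_I(\Gamma^m)$: points whose non-$+\infty$ coordinates are exactly those in $I$. Congruence: $a\equiv b\,[n]$ iff $a-b\in n\mathcal{Z}$, and $a\equiv+\infty\,[n]$ always. For $Y\subseteq F_K(\Gamma^k)$, $g:Y\to\Omega$ is affine if constantly $+\infty$ or $g(y)=\alpha_0+\sum_{i\in K}\alpha_iy_i$ ($\alpha_0\in\mathcal{Q}$, $\alpha_i\in\mathbb{Q}$); largely continuous if it extends to a continuous $\bar g$ on $\overline Y$. Largely continuous precells mod $N$: $\Gamma^0$ for $m=0$; for $m\geq1$, $A\subseteq F_I(\Gamma^m)$ such that $\widehat A$ is a largely continuous precell mod $\widehat N$ and for some non-negative largely continuous affine $\mu,\nu:\widehat A\to\Omega$ and integer $0\leq\rho<N_m$ (a largely continuous presentation), $A=\{a\in F_I(\Gamma^m):\widehat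 a\in\widehat A,\ \mu(\widehat a)\leq a_m\leq\nu(\widehat a),\ a_m\equiv\rho\,[N_m]\}$. *)

theory Defs
  imports "HOL-Analysis.Function_Topology"
begin

datatype 'a omega = Fin 'a | PInf

instantiation omega :: (linorder) linorder
begin
fun less_eq_omega :: "'a omega \<Rightarrow> 'a omega \<Rightarrow> bool" where
  "less_eq_omega (Fin a) (Fin b) = (a \<le> b)"
| "less_eq_omega _ PInf = True"
| "less_eq_omega PInf (Fin _) = False"
definition less_omega :: "'a omega \<Rightarrow> 'a omega \<Rightarrow> bool" where
  "less_omega x y = (x \<le> y \<and> \<not> y \<le> x)"
instance
proof
  fix x y z :: "'a omega"
  show "(x < y) = (x \<le> y \<and> \<not> y \<le> x)" by (simp add: less_omega_def)
  show "x \<le> x" by (cases x) auto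
  show "x \<le> y \<Longrightarrow> y \<le> z \<Longrightarrow> x \<le> z" by (cases x; cases y; cases z) auto
  show "x \<le> y \<Longrightarrow> y \<le> x \<Longrightarrow> x = y" by (cases x; cases y) auto
  show "x \<le> y \<or> y \<le> x" by (cases x; cases y) auto
qed
end

instantiation omega :: (linorder) linorder_topology
begin
definition open_omega :: "'a omega set \<Rightarrow> bool" where
  "open_omega = generate_topology (range (\<lambda>a. {..< a}) \<union> range (\<lambda>a. {a <..}))"
instance by standard (simp add: open_omega_def)
end

fun the_fin :: "'a::zero omega \<Rightarrow> 'a" where
  "the_fin (Fin a) = a"
| "the_fin PInf = 0"

definition nmul :: "nat \<Rightarrow> 'a::ab_group_add \<Rightarrow> 'a" where
  "nmul n x = (\<Sum>i<n. x)"

definition zmul :: "int \<Rightarrow> 'a::ab_group_add \<Rightarrow> 'a" where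
  "zmul k x = (if 0 \<le> k then nmul (nat k) x else - nmul (nat (- k)) x)"

text \<open>Multiplication by a rational in the divisible group Q (well defined since
Q is divisible and torsion-free).\<close>
definition rsc :: "rat \<Rightarrow> 'a::ab_group_add \<Rightarrow> 'a" where
  "rsc r x = (THE y. nmul (nat (snd (quotient_of r))) y = zmul (fst (quotient_of r)) x)"

text \<open>zgroup_hull Z e: the type 'a is Q, the divisible hull of the
Z-group Z, whose least positive element is e (the element 1; so r \<in> \<rat>
is identified with rsc r e).\<close>
definition zgroup_hull :: "'a::linordered_ab_group_add set \<Rightarrow> 'a \<Rightarrow> bool" where
  "zgroup_hull Z e \<longleftrightarrow>
     0 \<in> Z \<and> (\<forall>x\<in>Z. \<forall>y\<in>Z. x + y \<in> Z) \<and> (\<forall>x\<in>Z. - x \<in> Z) \<and>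
     e \<in> Z \<and> 0 < e \<and> (\<forall>z\<in>Z. 0 < z \<longrightarrow> e \<le> z) \<and>
     (\<forall>n::nat. n \<ge> 1 \<longrightarrow>
        card ((\<lambda>z. {w\<in>Z. z - w \<in> nmul n ` Z}) ` Z) = n) \<and>
     (\<forall>(x::'a) (n::nat). n \<ge> 1 \<longrightarrow> (\<exists>y. nmul n y = x)) \<and>
     (\<forall>x::'a. \<exists>n::nat. n \<ge> 1 \<and> nmul n x \<in> Z)"

text \<open>A point of Omega^m is represented as a function nat => 'a omega
whose coordinates 0..m-1 are the coordinates a_1..a_m and whose coordinates
\<ge> m are +\<infinity>. The topology is the product topology on such functions.\<close>

definition FI :: "'a set \<Rightarrow> nat set \<Rightarrow> (nat \<Rightarrow> 'a omega) set" where
  "FI Z I = {a. (\<forall>i\<in>I. a i \<in> Fin ` Z) \<and> (\<forall>i. i \<notin> I \<longrightarrow> a i = PInf)}"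

definition trunc :: "nat \<Rightarrow> (nat \<Rightarrow> 'a omega) \<Rightarrow> (nat \<Rightarrow> 'a omega)" where
  "trunc k a = (\<lambda>i. if i < k then a i else PInf)"

definition socle :: "nat \<Rightarrow> (nat \<Rightarrow> 'a omega) set \<Rightarrow> (nat \<Rightarrow> 'a omega) set" where
  "socle k A = trunc k ` A"

definition pfrontier :: "('b::topological_space) set \<Rightarrow> 'b set" where
  "pfrontier A = closure (closure A - A)"

definition congr :: "'a::ab_group_add set \<Rightarrow> 'a \<Rightarrow> 'a omega \<Rightarrow> nat \<Rightarrow> nat \<Rightarrow> bool" where
  "congr Z e x r n = (case x of PInf \<Rightarrow> True | Fin z \<Rightarrow> z - nmul r e \<in> nmul n ` Z)"

definition is_affine :: "'a::ab_group_add set \<Rightarrow> nat set \<Rightarrow> (nat \<Rightarrow> 'a omega) set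
     \<Rightarrow> ((nat \<Rightarrow> 'a omega) \<Rightarrow> 'a omega) \<Rightarrow> bool" where
  "is_affine Z K Y g \<longleftrightarrow> Y \<subseteq> FI Z K \<and>
     ((\<forall>y\<in>Y. g y = PInf) \<or>
      (\<exists>(\<alpha>0::'a) (\<alpha>::nat \<Rightarrow> rat). \<forall>y\<in>Y. g y = Fin (\<alpha>0 + (\<Sum>i\<in>K. rsc (\<alpha> i) (the_fin (y i))))))"

definition lcont :: "('b::topological_space) set \<Rightarrow> ('b \<Rightarrow> 'c::topological_space) \<Rightarrow> bool" where
  "lcont Y g \<longleftrightarrow> (\<exists>h. continuous_on (closure Y) h \<and> (\<forall>y\<in>Y. h y = g y))"

definition lc_pres :: "'a::linordered_ab_group_add set \<Rightarrow> 'a \<Rightarrow> nat \<Rightarrow> (nat \<Rightarrow> nat)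
    \<Rightarrow> (nat \<Rightarrow> 'a omega) set \<Rightarrow> ((nat \<Rightarrow> 'a omega) \<Rightarrow> 'a omega)
    \<Rightarrow> ((nat \<Rightarrow> 'a omega) \<Rightarrow> 'a omega) \<Rightarrow> nat \<Rightarrow> bool" where
  "lc_pres Z e m N A \<mu> \<nu> \<rho> \<longleftrightarrow> 1 \<le> m \<and>
     (\<exists>I \<subseteq> {..<m}.
        is_affine Z (I - {m - 1}) (socle (m - 1) A) \<mu> \<and>
        is_affine Z (I - {m - 1}) (socle (m - 1) A) \<nu> \<and>
        lcont (socle (m - 1) A) \<mu> \<and> lcont (socle (m - 1) A) \<nu> \<and>
        (\<forall>x\<in>socle (m - 1) A. Fin 0 \<le> \<mu> x \<and> Fin 0 \<le> \<nu> x) \<and>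
        \<rho> < N (m - 1) \<and>
        A = {a \<in> FI Z I. trunc (m - 1) a \<in> socle (m - 1) A \<and>
               \<mu> (trunc (m - 1) a) \<le> a (m - 1) \<and> a (m - 1) \<le> \<nu> (trunc (m - 1) a) \<and>
               congr Z e (a (m - 1)) \<rho> (N (m - 1))})"

fun lc_precell :: "'a::linordered_ab_group_add set \<Rightarrow> 'a \<Rightarrow> nat \<Rightarrow> (nat \<Rightarrow> nat)
    \<Rightarrow> (nat \<Rightarrow> 'a omega) set \<Rightarrow> bool" where
  "lc_precell Z e 0 N A = (A = {\<lambda>_. PInf})"
| "lc_precell Z e (Suc k) N A =
     (lc_precell Z e k N (socle k A) \<and> (\<exists>\<mu> \<nu> \<rho>. lc_pres Z e (Suc k) N A \<mu> \<nu> \<rho>))"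

end

theory Submission
  imports Defs
begin


lemma nmul_0[simp]: "nmul 0 x = 0" by (simp add: nmul_def)
lemma nmul_Suc: "nmul (Suc n) x = x + nmul n x" by (simp add: nmul_def add.commute)
lemma nmul_Suc0[simp]: "nmul (Suc 0) x = x" by (simp add: nmul_Suc)
lemma nmul_1[simp]: "nmul 1 x = x" by simp
lemma nmul_add_nat: "nmul (m + n) x = nmul m x + nmul n x"
  by (induction m) (simp_all add: nmul_Suc add.assoc)
lemma nmul_add: "nmul n (x + y) = nmul n x + nmul n y"
  by (simp add: nmul_def sum.distrib)
lemma nmul_minus: "nmul n (- x) = - nmul n x"
  by (simp add: nmul_def sum_negf)
lemma nmul_diff: "nmul n (x - y) = nmul n x - nmul n y"
  using nmul_add[of n x "-y"] by (simp add: nmul_minus)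
lemma nmul_zero[simp]: "nmul n 0 = 0" by (simp add: nmul_def)
lemma nmul_mult: "nmul (m * n) x = nmul m (nmul n x)"
  by (induction m) (simp_all add: nmul_Suc nmul_add_nat nmul_add)
lemma nmul_sum: "nmul n (sum g S) = (\<Sum>i\<in>S. nmul n (g i))"
  by (induction n) (simp_all add: nmul_Suc sum.distrib)
lemma nmul_comm: "nmul m (nmul n x) = nmul n (nmul m x)"
  by (metis mult.commute nmul_mult)

lemma nmul_mono: "(x::'a::linordered_ab_group_add) \<le> y \<Longrightarrow> nmul n x \<le> nmul n y"
  by (simp add: nmul_def sum_mono)
lemma nmul_strict_mono: "(x::'a::linordered_ab_group_add) < y \<Longrightarrow> 0 < n \<Longrightarrow> nmul n x < nmul n y"
proof (induction n)
  case 0 then show ?case by simp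
next
  case (Suc n)
  show ?case
  proof (cases "n = 0")
    case True then show ?thesis using Suc by simp
  next
    case False
    then have "nmul n x < nmul n y" using Suc by simp
    then show ?thesis using Suc(2) by (simp add: nmul_Suc add_strict_mono)
  qed
qed
lemma nmul_less_iff: "0 < n \<Longrightarrow> nmul n (x::'a::linordered_ab_group_add) < nmul n y \<longleftrightarrow> x < y"
  by (metis nmul_mono nmul_strict_mono not_le)
lemma nmul_le_iff: "0 < n \<Longrightarrow> nmul n (x::'a::linordered_ab_group_add) \<le> nmul n y \<longleftrightarrow> x \<le> y"
  by (metis nmul_mono nmul_strict_mono not_le)
lemma nmul_inj: "0 < n \<Longrightarrow> nmul n (x::'a::linordered_ab_group_add) = nmul n y \<longleftrightarrow> x = y"
  by (metis nmul_le_iff order.antisym order.refl)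
lemma nmul_nonneg: "0 \<le> (x::'a::linordered_ab_group_add) \<Longrightarrow> 0 \<le> nmul n x"
  using nmul_mono[of 0 x n] by simp
lemma nmul_pos: "0 < (x::'a::linordered_ab_group_add) \<Longrightarrow> 0 < n \<Longrightarrow> 0 < nmul n x"
  using nmul_strict_mono[of 0 x n] by simp
lemma nmul_mono_n: "0 \<le> (x::'a::linordered_ab_group_add) \<Longrightarrow> m \<le> n \<Longrightarrow> nmul m x \<le> nmul n x"
  using nmul_add_nat[of m "n - m" x] nmul_nonneg[of x "n-m"] by simp

lemma zmul_nat[simp]: "zmul (int n) x = nmul n x" by (simp add: zmul_def)
lemma zmul_0[simp]: "zmul 0 x = 0" by (simp add: zmul_def)
lemma zmul_1[simp]: "zmul 1 x = x" by (simp add: zmul_def)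
lemma zmul_minus: "zmul (- k) x = - zmul k x"
  by (cases "k = 0") (auto simp add: zmul_def)
lemma zmul_neg_x: "zmul k (- x) = - zmul k x"
  by (simp add: zmul_def nmul_minus)
lemma zmul_repr: "zmul k x = nmul (nat k) x - nmul (nat (- k)) x"
  by (simp add: zmul_def)
lemma nmul_eq_cross: "a + d = c + b \<Longrightarrow> nmul a x - nmul b x = nmul c x - nmul d x"
proof -
  assume "a + d = c + b"
  then have "nmul a x + nmul d x = nmul c x + nmul b x" by (metis nmul_add_nat)
  then show ?thesis by (simp add: algebra_simps)
qed
lemma zmul_add: "zmul (k + l) x = zmul k x + zmul l x"
proof -
  have "zmul k x + zmul l x = nmul (nat k + nat l) x - nmul (nat (-k) + nat (-l)) x"
    by (simp add: zmul_repr nmul_add_nat algebra_simps)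
  also have "\<dots> = nmul (nat (k+l)) x - nmul (nat (-(k+l))) x"
    by (rule nmul_eq_cross) linarith
  finally show ?thesis by (simp add: zmul_repr)
qed
lemma zmul_diff: "zmul (k - l) x = zmul k x - zmul l x"
  using zmul_add[of k "-l" x] by (simp add: zmul_minus)
lemma zmul_addx: "zmul k (x + y) = zmul k x + zmul k y"
  by (simp add: zmul_def nmul_add)
lemma zmul_diffx: "zmul k (x - y) = zmul k x - zmul k y"
  using zmul_addx[of k x "-y"] by (simp add: zmul_neg_x)
lemma zmul_zero[simp]: "zmul k 0 = 0" by (simp add: zmul_def)
lemma zmul_sum: "zmul k (sum g S) = (\<Sum>i\<in>S. zmul k (g i))"
  by (simp add: zmul_def nmul_sum sum_negf)
lemma zmul_nn: "0 \<le> k \<Longrightarrow> zmul k x = nmul (nat k) x" by (simp add: zmul_def)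
lemma zmul_mult_nn: "0 \<le> k \<Longrightarrow> 0 \<le> l \<Longrightarrow> zmul (k * l) x = zmul k (zmul l x)"
  by (simp add: zmul_nn nat_mult_distrib nmul_mult)
lemma zmul_mult: "zmul (k * l) x = zmul k (zmul l x)"
proof -
  have A: "\<exists>a. k = int a \<or> k = - int a" for k :: int
    by (metis int_cases2)
  obtain a b where a: "k = int a \<or> k = - int a" and b: "l = int b \<or> l = - int b"
    using A by blast
  have nn: "zmul (int a * int b) x = zmul (int a) (zmul (int b) x)"
    by (rule zmul_mult_nn) auto
  show ?thesis using a b
  proof (elim disjE)
    assume "k = int a" "l = int b" then show ?thesis using nn by simp
  next
    assume "k = int a" "l = - int b" then show ?thesis using nn
      by (simp only: mult_minus_right zmul_minus zmul_neg_x)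
  next
    assume "k = - int a" "l = int b" then show ?thesis using nn
      by (simp only: mult_minus_left zmul_minus)
  next
    assume "k = - int a" "l = - int b" then show ?thesis using nn
      by (simp only: mult_minus_left mult_minus_right zmul_minus zmul_neg_x minus_minus)
  qed
qed
lemma nmul_zmul: "nmul n (zmul k x) = zmul (int n * k) x"
  by (simp add: zmul_mult)
lemma zmul_mono: "0 \<le> k \<Longrightarrow> (x::'a::linordered_ab_group_add) \<le> y \<Longrightarrow> zmul k x \<le> zmul k y"
  by (simp add: zmul_nn nmul_mono)


locale zg =
  fixes Z :: "'a::linordered_ab_group_add set" and e :: 'a
  assumes hull: "zgroup_hull Z e"
begin

lemma Z0: "0 \<in> Z" and Zadd: "x \<in> Z \<Longrightarrow> y \<in> Z \<Longrightarrow> x + y \<in> Z" and Zneg: "x \<in> Z \<Longrightarrow> - x \<in> Z"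
  and eZ: "e \<in> Z" and epos: "0 < e" and eleast: "z \<in> Z \<Longrightarrow> 0 < z \<Longrightarrow> e \<le> z"
  and Zcard: "n \<ge> 1 \<Longrightarrow> card ((\<lambda>z. {w\<in>Z. z - w \<in> nmul n ` Z}) ` Z) = n"
  and divi: "n \<ge> 1 \<Longrightarrow> \<exists>y. nmul n y = x"
  and hullZ: "\<exists>n::nat. n \<ge> 1 \<and> nmul n x \<in> Z"
  using hull unfolding zgroup_hull_def by blast+

lemma Zdiff: "x \<in> Z \<Longrightarrow> y \<in> Z \<Longrightarrow> x - y \<in> Z"
  using Zadd[of x "-y"] Zneg[of y] by simp
lemma Znmul: "x \<in> Z \<Longrightarrow> nmul n x \<in> Z"
  by (induction n) (simp_all add: nmul_Suc Z0 Zadd)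
lemma Zzmul: "x \<in> Z \<Longrightarrow> zmul k x \<in> Z"
  by (simp add: zmul_def Znmul Zneg)
lemma Zsum: "(\<And>i. i \<in> S \<Longrightarrow> g i \<in> Z) \<Longrightarrow> sum g S \<in> Z"
  by (induction S rule: infinite_finite_induct) (simp_all add: Z0 Zadd)
lemma Zdiscrete: "x \<in> Z \<Longrightarrow> y \<in> Z \<Longrightarrow> y - e < x \<Longrightarrow> x < y + e \<Longrightarrow> x = y"
proof (rule ccontr)
  assume xy: "x \<in> Z" "y \<in> Z" "y - e < x" "x < y + e" "x \<noteq> y"
  show False
  proof (cases "x < y")
    case True then have "e \<le> y - x" using eleast[of "y - x"] Zdiff xy by simp
    then show False using xy by (simp add: algebra_simps)
  next
    case False then have "y < x" using xy by simp
    then have "e \<le> x - y" using eleast[of "x - y"] Zdiff xy by simp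
    then show False using xy by (simp add: algebra_simps)
  qed
qed

lemma rat_repr: fixes r :: rat shows "\<exists>p n. 0 < n \<and> r = of_int p / of_nat n"
proof -
  obtain p d where q: "quotient_of r = (p, d)" by (cases "quotient_of r")
  then have "d > 0" "r = of_int p / of_int d" by (simp_all add: quotient_of_denom_pos quotient_of_div)
  then show ?thesis by (intro exI[of _ p] exI[of _ "nat d"]) simp
qed

lemma rsc_char:
  fixes x y :: 'a
  assumes n: "0 < n" and y: "nmul n y = zmul p x"
  shows "rsc (of_int p / of_nat n) x = y"
proof -
  define r where "r = (of_int p / of_nat n :: rat)"
  obtain p' d where q: "quotient_of r = (p', d)" by (cases "quotient_of r")
  then have d: "d > 0" and rr: "r = of_int p' / of_int d" by (simp_all add: quotient_of_denom_pos quotient_of_div)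
  have eq: "p * d = p' * int n"
  proof -
    have "(of_int p / of_nat n :: rat) = of_int p' / of_int d" using rr r_def by simp
    then have "(of_int p * of_int d :: rat) = of_int p' * of_nat n" using n d
      by (simp add: field_simps)
    then show ?thesis by (metis of_int_eq_iff of_int_mult of_int_of_nat_eq)
  qed
  have key: "nmul (nat d) y = zmul p' x"
  proof -
    have "nmul n (nmul (nat d) y) = nmul (nat d) (nmul n y)" by (rule nmul_comm)
    also have "\<dots> = zmul (d * p) x" using y d by (simp add: nmul_zmul)
    also have "\<dots> = zmul (int n * p') x" using eq by (simp add: mult.commute)
    also have "\<dots> = nmul n (zmul p' x)" by (simp add: nmul_zmul)
    finally show ?thesis using n nmul_inj by blast
  qed
  have "(THE y. nmul (nat (snd (quotient_of r))) y = zmul (fst (quotient_of r)) x) = y"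
  proof (rule the_equality)
    show "nmul (nat (snd (quotient_of r))) y = zmul (fst (quotient_of r)) x" using key q by simp
    fix z assume "nmul (nat (snd (quotient_of r))) z = zmul (fst (quotient_of r)) x"
    then have "nmul (nat d) z = nmul (nat d) y" using key q by simp
    then show "z = y" using nmul_inj[of "nat d" z y] d by simp
  qed
  then show ?thesis by (simp add: rsc_def r_def)
qed

lemma rsc_spec: "0 < n \<Longrightarrow> r = of_int p / of_nat n \<Longrightarrow> nmul n (rsc r (x::'a)) = zmul p x"
proof -
  assume n: "0 < n" and r: "r = of_int p / of_nat n"
  obtain y where y: "nmul n y = zmul p x" using divi[of n "zmul p x"] n by auto
  show ?thesis using rsc_char[OF n y] r y by simp
qed

lemma rsc_add_r: fixes x y :: 'a shows "rsc (r + s) x = rsc r x + rsc s x"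
proof -
  obtain p n where r: "0 < n" "r = of_int p / of_nat n" using rat_repr by blast
  obtain q k where s: "0 < k" "s = of_int q / of_nat k" using rat_repr by blast
  have rs: "r + s = of_int (p * int k + q * int n) / of_nat (n * k)"
    using r s by (simp add: field_simps)
  have "nmul (n * k) (rsc r x + rsc s x) = zmul (p * int k + q * int n) x"
  proof -
    have "nmul (n * k) (rsc r x) = nmul k (nmul n (rsc r x))" by (simp add: nmul_mult nmul_comm mult.commute)
    also have "\<dots> = zmul (int k * p) x" using rsc_spec[OF r, of x] by (simp add: nmul_zmul)
    finally have 1: "nmul (n * k) (rsc r x) = zmul (int k * p) x" .
    have "nmul (n * k) (rsc s x) = nmul n (nmul k (rsc s x))" by (simp add: nmul_mult)
    also have "\<dots> = zmul (int n * q) x" using rsc_spec[OF s, of x] by (simp add: nmul_zmul)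
    finally have 2: "nmul (n * k) (rsc s x) = zmul (int n * q) x" .
    show ?thesis by (simp only: nmul_add 1 2 zmul_add) (simp add: mult.commute)
  qed
  then have "rsc (of_int (p * int k + q * int n) / of_nat (n * k)) x = rsc r x + rsc s x"
    by (intro rsc_char) (use r s in simp_all)
  then show ?thesis by (simp only: rs)
qed

lemma rsc_mult: fixes x y :: 'a shows "rsc (r * s) x = rsc r (rsc s x)"
proof -
  obtain p n where r: "0 < n" "r = of_int p / of_nat n" using rat_repr by blast
  obtain q k where s: "0 < k" "s = of_int q / of_nat k" using rat_repr by blast
  have rs: "r * s = of_int (p * q) / of_nat (n * k)"
    unfolding r s by simp
  have "nmul (n * k) (rsc r (rsc s x)) = zmul (p * q) x"
  proof -
    have "nmul (n * k) (rsc r (rsc s x)) = nmul k (nmul n (rsc r (rsc s x)))"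
      by (simp add: nmul_mult nmul_comm mult.commute)
    also have "\<dots> = nmul k (zmul p (rsc s x))" using rsc_spec[OF r, of "rsc s x"] by simp
    also have "\<dots> = zmul p (nmul k (rsc s x))"
    proof -
      have "zmul (int k * p) (rsc s x) = zmul p (zmul (int k) (rsc s x))" by (metis mult.commute zmul_mult)
      then show ?thesis by (simp add: nmul_zmul)
    qed
    also have "\<dots> = zmul p (zmul q x)" using rsc_spec[OF s, of x] by simp
    finally show ?thesis by (simp add: zmul_mult)
  qed
  then have "rsc (of_int (p * q) / of_nat (n * k)) x = rsc r (rsc s x)"
    by (intro rsc_char) (use r s in simp_all)
  then show ?thesis by (simp only: rs)
qed

lemma rsc_addx: fixes x y :: 'a shows "rsc r (x + y) = rsc r x + rsc r y"
proof -
  obtain p n where r: "0 < n" "r = of_int p / of_nat n" using rat_repr by blast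
  have 1: "nmul n (rsc r x) = zmul p x" and 2: "nmul n (rsc r y) = zmul p y"
    using rsc_spec[OF r, of x] rsc_spec[OF r, of y] by auto
  have "nmul n (rsc r x + rsc r y) = zmul p (x + y)"
    by (simp add: nmul_add zmul_addx 1 2)
  then show ?thesis using rsc_char r by simp
qed

lemma rsc_int: fixes x y :: 'a shows "rsc (of_int p) x = zmul p x"
  using rsc_char[of 1 "zmul p x" p x] by simp
lemma rsc_nat: fixes x y :: 'a shows "rsc (of_nat n) x = nmul n x"
  using rsc_int[of "int n" x] by simp
lemma rsc_0[simp]: fixes x y :: 'a shows "rsc 0 x = 0" using rsc_int[of 0 x] by simp
lemma rsc_1[simp]: fixes x y :: 'a shows "rsc 1 x = x" using rsc_int[of 1 x] by simp
lemma rsc_zero[simp]: "rsc r (0::'a) = 0" using rsc_addx[of r 0 0] by simp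
lemma rsc_minusx: fixes x y :: 'a shows "rsc r (- x) = - rsc r x"
proof -
  have "rsc r x + rsc r (-x) = 0" using rsc_addx[of r x "-x"] by simp
  then show ?thesis by (metis minus_unique)
qed
lemma rsc_diffx: fixes x y :: 'a shows "rsc r (x - y) = rsc r x - rsc r y"
  using rsc_addx[of r x "-y"] by (simp add: rsc_minusx)
lemma rsc_minus_r: fixes x y :: 'a shows "rsc (- r) x = - rsc r x"
proof -
  have "rsc r x + rsc (-r) x = 0" using rsc_add_r[of r "-r" x] by simp
  then show ?thesis by (metis minus_unique)
qed
lemma rsc_diff_r: fixes x y :: 'a shows "rsc (r - s) x = rsc r x - rsc s x"
  using rsc_add_r[of r "-s" x] by (simp add: rsc_minus_r)
lemma rsc_sum: fixes g :: "_ \<Rightarrow> 'a" shows "rsc r (sum g S) = (\<Sum>i\<in>S. rsc r (g i))"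
  by (induction S rule: infinite_finite_induct) (simp_all add: rsc_addx)
lemma rsc_sum_r: fixes x y :: 'a shows "rsc (sum g S) x = (\<Sum>i\<in>S. rsc (g i) x)"
  by (induction S rule: infinite_finite_induct) (simp_all add: rsc_add_r)

lemma rsc_mono: fixes x y :: 'a assumes "0 \<le> r" "x \<le> y" shows "rsc r x \<le> rsc r y"
proof -
  obtain p n where r: "0 < n" "r = of_int p / of_nat n" using rat_repr by blast
  then have "0 \<le> p" using assms(1) by (simp add: zero_le_divide_iff)
  then have "zmul p x \<le> zmul p y" using zmul_mono assms by blast
  then show ?thesis using rsc_spec[OF r] nmul_le_iff[OF r(1)] by metis
qed
lemma rsc_strict_mono: fixes x y :: 'a assumes "0 < r" "x < y" shows "rsc r x < rsc r y"
proof -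
  obtain p n where r: "0 < n" "r = of_int p / of_nat n" using rat_repr by blast
  then have "0 < p" using assms(1) by (simp add: zero_less_divide_iff)
  then have "zmul p x < zmul p y" using assms by (simp add: zmul_nn nmul_strict_mono)
  then show ?thesis using rsc_spec[OF r] nmul_less_iff[OF r(1)] by metis
qed
lemma rsc_nonneg: fixes x y :: 'a shows "0 \<le> r \<Longrightarrow> 0 \<le> x \<Longrightarrow> 0 \<le> rsc r x"
  using rsc_mono[of r 0 x] by simp
lemma rsc_mono_r: fixes x y :: 'a shows "0 \<le> x \<Longrightarrow> r \<le> s \<Longrightarrow> rsc r x \<le> rsc s x"
  using rsc_nonneg[of "s - r" x] by (simp add: rsc_diff_r)
lemma rsc_antimono: fixes x y :: 'a shows "r \<le> 0 \<Longrightarrow> x \<le> y \<Longrightarrow> rsc r y \<le> rsc r x"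
  using rsc_mono[of "-r" x y] by (simp add: rsc_minus_r)
lemma rsc_inv: fixes x y :: 'a shows "r \<noteq> 0 \<Longrightarrow> rsc (inverse r) (rsc r x) = x"
  by (simp add: rsc_mult[symmetric])
lemma rsc_inj: fixes x y :: 'a shows "r \<noteq> 0 \<Longrightarrow> rsc r x = rsc r y \<longleftrightarrow> x = y"
  by (metis rsc_inv)
lemma rsc_Ints_Z: "r \<in> \<int> \<Longrightarrow> x \<in> Z \<Longrightarrow> rsc r x \<in> Z"
  by (metis Ints_cases rsc_int Zzmul)

end

context zg begin

lemma nmul_strict_mono_n: "0 < (x::'a) \<Longrightarrow> m < n \<Longrightarrow> nmul m x < nmul n x"
  using nmul_add_nat[of m "n - m" x] nmul_pos[of x "n-m"] by simp

lemma euclid: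
  assumes n: "n \<ge> 1" and z: "z \<in> Z"
  shows "\<exists>w\<in>Z. \<exists>j<n. z = nmul n w + nmul j e"
proof -
  define C where "C = (\<lambda>z. {w\<in>Z. z - w \<in> nmul n ` Z})"
  define S where "S = C ` Z"
  have cS: "card S = n" using Zcard[OF n] by (simp add: S_def C_def)
  then have fS: "finite S" using n by (metis card_ge_0_finite not_one_le_zero zero_less_iff_neq_zero card.infinite)
  define T where "T = (\<lambda>j. C (nmul j e)) ` {..<n}"
  have TS: "T \<subseteq> S" unfolding T_def S_def using Znmul[OF eZ] by auto
  have self: "x \<in> Z \<Longrightarrow> x \<in> C x" for x unfolding C_def using Z0 by (auto intro: image_eqI[of 0 _ 0])
  have inj: "inj_on (\<lambda>j. C (nmul j e)) {..<n}"
  proof (rule inj_onI, rule ccontr)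
    fix i j assume ij: "i \<in> {..<n}" "j \<in> {..<n}" "C (nmul i e) = C (nmul j e)" "i \<noteq> j"
    have gen: "False" if "i < j" "j < n" "C (nmul i e) = C (nmul j e)" for i j
    proof -
      have "nmul i e \<in> C (nmul j e)" using self[OF Znmul[OF eZ, of i]] that by simp
      then obtain w where w: "w \<in> Z" "nmul j e - nmul i e = nmul n w" unfolding C_def by auto
      have "nmul j e - nmul i e = nmul (j - i) e" using nmul_add_nat[of i "j - i" e] that by simp
      then have "0 < nmul n w" "nmul n w < nmul n e" using w nmul_pos[OF epos, of "j-i"] nmul_strict_mono_n[OF epos, of "j-i" n] that by auto
      then have w1: "nmul n 0 < nmul n w" and w2: "nmul n w < nmul n e" by simp_all
      have np: "0 < n" using n by simp
      have "0 < w" using w1 nmul_less_iff[OF np] by blast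
      moreover have "w < e" using w2 nmul_less_iff[OF np] by blast
      ultimately have "0 < w" "w < e" by simp_all
      then show False using eleast w by (simp add: not_le[symmetric])
    qed
    show False using ij by (cases "i < j") (use gen[of i j] gen[of j i] in auto)
  qed
  have "card T = n" unfolding T_def using card_image[OF inj] by simp
  then have "T = S" using card_subset_eq[OF fS TS] cS by simp
  then have "C z \<in> T" using z S_def by auto
  then obtain j where j: "j < n" "C z = C (nmul j e)" unfolding T_def by auto
  then have "z \<in> C (nmul j e)" using self[OF z] by simp
  then obtain w where w: "w \<in> Z" "nmul j e - z = nmul n w" unfolding C_def by auto
  then have "z = nmul n (- w) + nmul j e" by (simp add: nmul_minus algebra_simps)
  then show ?thesis using j Zneg[OF w(1)] by blast
qed

lemma ceil_ex: "\<exists>w\<in>Z. u \<le> w \<and> w < u + e"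
proof -
  obtain k where k: "k \<ge> 1" "nmul k u \<in> Z" using hullZ by blast
  obtain w0 j where w0: "w0 \<in> Z" "j < k" "nmul k u = nmul k w0 + nmul j e" using euclid[OF k] by blast
  have kp: "0 < k" using k by simp
  show ?thesis
  proof (cases "j = 0")
    case True
    then have "nmul k u = nmul k w0" using w0 by simp
    then have "u = w0" using nmul_inj[OF kp] by blast
    then show ?thesis using w0 epos by auto
  next
    case False
    have 1: "nmul k u < nmul k (w0 + e)"
      using w0 nmul_strict_mono_n[OF epos w0(2)] by (simp add: nmul_add)
    have 2: "nmul k (w0 + e) < nmul k (u + e)"
      using w0 nmul_pos[OF epos, of j] False by (simp add: nmul_add)
    show ?thesis using 1 2 nmul_less_iff[OF kp] Zadd[OF w0(1) eZ]
      by (meson less_imp_le)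
  qed
qed

lemma nZ_neg: "x \<in> nmul n ` Z \<Longrightarrow> - x \<in> nmul n ` Z"
  by (auto simp: nmul_minus[symmetric] intro: Zneg)

lemma window_lo:
  assumes n: "n \<ge> 1" and r: "r \<in> Z"
  shows "\<exists>y\<in>Z. y - r \<in> nmul n ` Z \<and> q \<le> y \<and> y < q + nmul n e"
proof -
  obtain u where u: "nmul n u = q - r" using divi[OF n] by blast
  obtain w where w: "w \<in> Z" "u \<le> w" "w < u + e" using ceil_ex by blast
  have np: "0 < n" using n by simp
  define y where "y = r + nmul n w"
  have "y \<in> Z" using y_def Zadd[OF r Znmul[OF w(1)]] by simp
  moreover have "y - r \<in> nmul n ` Z" using y_def w by simp
  moreover have "q \<le> y" using nmul_mono[OF w(2), of n] u y_def by (simp add: algebra_simps)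
  moreover have "y < q + nmul n e"
  proof -
    have "nmul n w < nmul n (u + e)" using nmul_strict_mono[OF w(3) np] .
    then show ?thesis using u y_def by (simp add: nmul_add algebra_simps)
  qed
  ultimately show ?thesis by blast
qed

lemma window_hi:
  assumes n: "n \<ge> 1" and r: "r \<in> Z"
  shows "\<exists>y\<in>Z. y - r \<in> nmul n ` Z \<and> q - nmul n e < y \<and> y \<le> q"
proof -
  obtain y where y: "y \<in> Z" "y - (-r) \<in> nmul n ` Z" "- q \<le> y" "y < - q + nmul n e"
    using window_lo[OF n Zneg[OF r], of "-q"] by blast
  have "- y - r = - (y - (-r))" by (simp add: algebra_simps)
  then have "- y - r \<in> nmul n ` Z" using nZ_neg[OF y(2)] by metis
  moreover have "q - nmul n e < - y" using y(4) by (simp add: algebra_simps)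
  moreover have "- y \<le> q" using y(3) by (simp add: minus_le_iff)
  ultimately show ?thesis using Zneg[OF y(1)] by blast
qed

lemma win_aux: "(a::'a) < x \<Longrightarrow> y \<le> a + e \<Longrightarrow> y < e + x"
  by (metis add.commute add_strict_right_mono le_less_trans)

lemma finite_window: "finite (Z \<inter> {c .. c + nmul K e})"
proof (induction K)
  case 0
  have "Z \<inter> {c .. c + nmul 0 e} \<subseteq> {c}" by auto
  then show ?case using finite_subset by blast
next
  case (Suc K)
  define S where "S = Z \<inter> {c + nmul K e <.. c + nmul (Suc K) e}"
  have "finite S"
  proof (cases "S = {}")
    case False
    then obtain y where y: "y \<in> S" by blast
    have "S \<subseteq> {y}"
    proof
      fix x assume x: "x \<in> S"
      have "x = y" using x y unfolding S_def
        by (intro Zdiscrete) (auto simp: nmul_Suc algebra_simps intro: win_aux)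
      then show "x \<in> {y}" by simp
    qed
    then show ?thesis using finite_subset by blast
  qed simp
  moreover have "Z \<inter> {c .. c + nmul (Suc K) e} \<subseteq> (Z \<inter> {c .. c + nmul K e}) \<union> S"
    unfolding S_def by auto
  ultimately show ?case using Suc finite_subset by blast
qed

end


lemma Fin_le_Fin[simp]: "(Fin a \<le> Fin b) = (a \<le> (b::'a::linorder))" by simp
lemma Fin_less_Fin[simp]: "(Fin a < Fin b) = (a < (b::'a::linorder))" by (simp add: less_omega_def less_le_not_le)
lemma le_PInf[simp]: "(x::'a::linorder omega) \<le> PInf" by (cases x) auto
lemma Fin_less_PInf[simp]: "Fin a < (PInf::'a::linorder omega)" by (simp add: less_omega_def)
lemma PInf_le_Fin[simp]: "\<not> (PInf \<le> Fin (a::'a::linorder))" by simp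
lemma not_PInf_less[simp]: "\<not> (PInf < (x::'a::linorder omega))" by (simp add: less_omega_def)
lemma less_PInf_iff: "(x < (PInf::'a::linorder omega)) = (x \<noteq> PInf)"
  by (cases x) auto
lemma omega_neq_PInf: "x \<noteq> PInf \<Longrightarrow> x = Fin (the_fin x)" by (cases x) auto
lemma the_fin_Fin[simp]: "the_fin (Fin a) = a" by simp

lemma open_coord: "open V \<Longrightarrow> open {z::'i \<Rightarrow> 'b::topological_space. z i \<in> V}"
  using product_topology_basis'[of "{i}" "\<lambda>_. V" id] by simp

lemma open_box: "finite I \<Longrightarrow> (\<And>i. i \<in> I \<Longrightarrow> open (U i)) \<Longrightarrow> open {z::'i \<Rightarrow> 'b::topological_space. \<forall>i\<in>I. z i \<in> U i}"
  using product_topology_basis'[of I U id] by simp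

lemma sep_fun:
  assumes "y \<noteq> (p::'i \<Rightarrow> 'b::t1_space)"
  shows "\<exists>V. open V \<and> y \<in> V \<and> p \<notin> V"
proof -
  obtain i where "y i \<noteq> p i" using assms by auto
  then obtain V where V: "open V" "y i \<in> V" "p i \<notin> V" using t1_space by blast
  have "open {z::'i \<Rightarrow> 'b. z i \<in> V}" by (rule open_coord[OF V(1)])
  then show ?thesis using V by blast
qed

lemma isolated_closure:
  assumes "open U" "U \<inter> S \<subseteq> {p::'i \<Rightarrow> 'b::t1_space}"
  shows "U \<inter> closure S \<subseteq> {p}"
proof
  fix y assume y: "y \<in> U \<inter> closure S"
  show "y \<in> {p}"
  proof (rule ccontr)
    assume "y \<notin> {p}"
    then obtain V where V: "open V" "y \<in> V" "p \<notin> V" using sep_fun by blast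
    have "open (U \<inter> V)" using V assms by blast
    have c: "\<forall>A T. T \<subseteq> A \<longrightarrow> open T \<longrightarrow> y \<in> T \<longrightarrow> S \<inter> A \<noteq> {}"
      using y closure_iff_nhds_not_empty[of y S] by simp
    have "S \<inter> (U \<inter> V) \<noteq> {}" using c[rule_format, of "U \<inter> V" "U \<inter> V"] \<open>open (U \<inter> V)\<close> y V by simp
    then show False using assms(2) V by blast
  qed
qed

lemma cont_coord: "continuous_on UNIV (\<lambda>z::'i \<Rightarrow> 'b::topological_space. z i)" by simp
lemma tendsto_cont_UNIV: "continuous_on UNIV g \<Longrightarrow> (g \<longlongrightarrow> g p) (at p within S)"
proof -
  assume "continuous_on UNIV g"
  then have "(g \<longlongrightarrow> g p) (at p within UNIV)" unfolding continuous_on_def by simp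
  then show ?thesis by (rule tendsto_within_subset) simp
qed
lemma tendsto_coord: "((\<lambda>z::'i \<Rightarrow> 'b::topological_space. z i) \<longlongrightarrow> p i) (at p within S)"
  using tendsto_cont_UNIV[OF cont_coord] .

lemma closed_coord_eq: "closed {z::'i \<Rightarrow> 'b::t1_space. z i = c}"
proof -
  have "open {z::'i \<Rightarrow> 'b. z i \<in> - {c}}" by (rule open_coord) (rule open_Compl, rule closed_singleton)
  moreover have "- {z::'i \<Rightarrow> 'b. z i = c} = {z::'i \<Rightarrow> 'b. z i \<in> - {c}}" by (simp add: set_eq_iff)
  ultimately show ?thesis unfolding closed_def by simp
qed

lemma cont_upd: "continuous_on UNIV (\<lambda>z::'i \<Rightarrow> 'b::topological_space. z(j := c))"
proof (rule continuous_on_coordinatewise_then_product)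
  fix i show "continuous_on UNIV (\<lambda>z. (z(j := c)) i)"
    by (cases "i = j") simp_all
qed
lemma tendsto_upd: "((\<lambda>z::'i \<Rightarrow> 'b::topological_space. z(j := c)) \<longlongrightarrow> p(j := c)) (at p within S)"
  using tendsto_cont_UNIV[OF cont_upd] .

lemma cont_upd_val: "continuous_on UNIV (\<lambda>w. (q::'i \<Rightarrow> 'b::topological_space)(j := w))"
proof (rule continuous_on_coordinatewise_then_product)
  fix i show "continuous_on UNIV (\<lambda>w. (q(j := w)) i)"
    by (cases "i = j") simp_all
qed

lemma large_lemma:
  fixes q :: "'i \<Rightarrow> 'a::linorder omega"
  assumes U: "open U" "q(j := PInf) \<in> U"
  shows "\<exists>b. \<forall>y. b < y \<longrightarrow> q(j := Fin y) \<in> U"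
proof -
  have o: "open ((\<lambda>w. q(j := w)) -` U)" by (rule open_vimage[OF U(1) cont_upd_val])
  have "PInf \<in> (\<lambda>w. q(j := w)) -` U" using U by simp
  then obtain b where b: "b < PInf" "{b<..PInf} \<subseteq> (\<lambda>w. q(j := w)) -` U"
    using open_left[OF o, of PInf "Fin undefined"] by auto
  obtain bv where bv: "b = Fin bv" using b(1) by (cases b) auto
  show ?thesis
  proof (intro exI allI impI)
    fix y assume "bv < y"
    then have "Fin y \<in> {b<..PInf}" using bv by simp
    then have "Fin y \<in> (\<lambda>w. q(j := w)) -` U" using subsetD[OF b(2)] by blast
    then show "q(j := Fin y) \<in> U" by simp
  qed
qed

lemma tendsto_fun_coord:
  fixes g :: "'x \<Rightarrow> 'i \<Rightarrow> 'b::topological_space"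
  assumes "\<And>i. ((\<lambda>x. g x i) \<longlongrightarrow> l i) F"
  shows "(g \<longlongrightarrow> l) F"
proof -
  have "limitin (product_topology (\<lambda>i. euclidean) UNIV) g l F"
    using assms by (simp add: limitin_componentwise limitin_canonical_iff)
  then show ?thesis by (simp add: euclidean_product_topology limitin_canonical_iff)
qed

lemma tendsto_PInf_iff: "((g::'x \<Rightarrow> 'a::linorder omega) \<longlongrightarrow> PInf) F \<longleftrightarrow> (\<forall>l. eventually (\<lambda>x. Fin l < g x) F)"
proof
  assume "(g \<longlongrightarrow> PInf) F"
  then show "\<forall>l. eventually (\<lambda>x. Fin l < g x) F" unfolding order_tendsto_iff by simp
next
  assume a: "\<forall>l. eventually (\<lambda>x. Fin l < g x) F"
  have "eventually (\<lambda>x. l < g x) F" if "l < PInf" for l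
  proof -
    have "l \<noteq> PInf" using that by (simp add: less_PInf_iff)
    then obtain v where "l = Fin v" by (cases l) auto
    then show ?thesis using a by metis
  qed
  then show "(g \<longlongrightarrow> PInf) F" unfolding order_tendsto_iff by simp
qed



lemma FI_iff: "a \<in> FI Z I \<longleftrightarrow> (\<forall>i\<in>I. a i \<in> Fin ` Z) \<and> (\<forall>i. i \<notin> I \<longrightarrow> a i = PInf)"
  by (simp add: FI_def)

context zg begin

lemma cong_gap:
  assumes n: "n \<ge> 1" and y: "y - r \<in> nmul n ` Z" and y': "y' - r \<in> nmul n ` Z"
    and lt: "y' < y" "y < y' + nmul n e"
  shows False
proof -
  obtain w1 w2 where w: "w1 \<in> Z" "w2 \<in> Z" "y - r = nmul n w1" "y' - r = nmul n w2" using y y' by blast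
  have d: "y - y' = nmul n (w1 - w2)" using w by (simp add: nmul_diff algebra_simps)
  have np: "0 < n" using n by simp
  have "nmul n 0 < nmul n (w1 - w2)" using d lt by (metis diff_gt_0_iff_gt nmul_zero)
  then have "0 < w1 - w2" using nmul_less_iff[OF np] by blast
  moreover have "nmul n (w1 - w2) < nmul n e" using d lt by (metis add.commute diff_less_eq)
  then have "w1 - w2 < e" using nmul_less_iff[OF np] by blast
  ultimately show False using eleast[of "w1 - w2"] Zdiff[OF w(1) w(2)] by simp
qed

end

locale cellctx = zg Z e for Z :: "'a::linordered_ab_group_add set" and e :: 'a +
  fixes m k :: nat and N :: "nat \<Rightarrow> nat" and A :: "(nat \<Rightarrow> 'a omega) set"
    and \<mu> \<nu> f :: "(nat \<Rightarrow> 'a omega) \<Rightarrow> 'a omega" and \<rho> :: nat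
    and \<alpha> :: "nat \<Rightarrow> rat" and \<beta> :: 'a
  assumes mk: "m = Suc k" and Npos: "\<forall>i<m. 0 < N i" and AZ: "A \<subseteq> FI Z {..<m}"
    and pres: "lc_pres Z e m N A \<mu> \<nu> \<rho>"
    and f_eq: "\<forall>a\<in>A. f a = Fin (\<beta> + (\<Sum>i<m. rsc (\<alpha> i) (the_fin (a i))))"
    and finf: "\<forall>p\<in>closure A - A. filterlim f (nhds PInf) (at p within A)"
begin

abbreviation "X \<equiv> socle k A"
abbreviation "bnd x \<equiv> (if 0 \<le> \<alpha> k then \<mu> x else \<nu> x)"
abbreviation "SS x \<equiv> \<beta> + (\<Sum>i<k. rsc (\<alpha> i) (the_fin (x i)))"
abbreviation "fhat \<equiv> (\<lambda>x. Fin (\<beta> + (\<Sum>i<k. rsc (\<alpha> i) (the_fin (x i))) + rsc (\<alpha> k) (the_fin (bnd x))))"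
abbreviation "NN \<equiv> N k"
abbreviation "r0 \<equiv> nmul \<rho> e"
abbreviation "W \<equiv> rsc (\<bar>\<alpha> k\<bar> * of_nat NN) e"

lemma m1: "1 \<le> m" using mk by simp
lemma NN1: "NN \<ge> 1"
proof -
  have "k < m" using mk by simp
  then have "0 < N k" using Npos by blast
  then show ?thesis by simp
qed
lemma r0Z: "r0 \<in> Z" using Znmul[OF eZ] .
lemma km: "m - 1 = k" using mk by simp

lemma presE:
  obtains I where "I \<subseteq> {..<m}" "is_affine Z (I - {k}) X \<mu>" "is_affine Z (I - {k}) X \<nu>"
    "lcont X \<mu>" "lcont X \<nu>" "\<forall>x\<in>X. Fin 0 \<le> \<mu> x \<and> Fin 0 \<le> \<nu> x"
    "A = {a \<in> FI Z I. trunc k a \<in> X \<and> \<mu> (trunc k a) \<le> a k \<and> a k \<le> \<nu> (trunc k a) \<and> congr Z e (a k) \<rho> NN}"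
  using pres unfolding lc_pres_def km by blast

lemma I_full:
  assumes "I \<subseteq> {..<m}" "A = {a \<in> FI Z I. P a}" "A \<noteq> {}"
  shows "I = {..<m}"
proof -
  obtain b where b: "b \<in> A" using assms(3) by blast
  have bI: "b \<in> FI Z I" using b assms(2) by blast
  have bm: "b \<in> FI Z {..<m}" using b AZ by blast
  have "i \<in> I" if "i < m" for i
  proof (rule ccontr)
    assume "i \<notin> I"
    then have "b i = PInf" using bI unfolding FI_iff by blast
    moreover have "b i \<in> Fin ` Z" using bm that unfolding FI_iff by blast
    ultimately show False by auto
  qed
  then have "{..<m} \<subseteq> I" by auto
  then show ?thesis using subset_antisym[OF assms(1)] by blast
qed

lemma A_iff: "a \<in> A \<longleftrightarrow> a \<in> FI Z {..<m} \<and> trunc k a \<in> X \<and> \<mu> (trunc k a) \<le> a k \<and> a k \<le> \<nu> (trunc k a) \<and> congr Z e (a k) \<rho> NN"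
proof -
  obtain I where I: "I \<subseteq> {..<m}" "is_affine Z (I - {k}) X \<mu>" "is_affine Z (I - {k}) X \<nu>"
    "lcont X \<mu>" "lcont X \<nu>" "\<forall>x\<in>X. Fin 0 \<le> \<mu> x \<and> Fin 0 \<le> \<nu> x"
    "A = {a \<in> FI Z I. trunc k a \<in> X \<and> \<mu> (trunc k a) \<le> a k \<and> a k \<le> \<nu> (trunc k a) \<and> congr Z e (a k) \<rho> NN}"
    by (rule presE)
  show ?thesis
  proof
    assume a: "a \<in> A"
    then have "a \<in> FI Z {..<m}" using AZ by blast
    then show "a \<in> FI Z {..<m} \<and> trunc k a \<in> X \<and> \<mu> (trunc k a) \<le> a k \<and> a k \<le> \<nu> (trunc k a) \<and> congr Z e (a k) \<rho> NN"
      using a I(7) by blast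
  next
    assume a: "a \<in> FI Z {..<m} \<and> trunc k a \<in> X \<and> \<mu> (trunc k a) \<le> a k \<and> a k \<le> \<nu> (trunc k a) \<and> congr Z e (a k) \<rho> NN"
    then have "A \<noteq> {}" unfolding socle_def by blast
    then have "I = {..<m}" using I_full[OF I(1) I(7)] by blast
    then show "a \<in> A" using a I(7) by blast
  qed
qed

lemma affine_full:
  assumes "A \<noteq> {}"
  shows "is_affine Z {..<k} X \<mu>" "is_affine Z {..<k} X \<nu>" "lcont X \<mu>" "lcont X \<nu>"
proof -
  obtain I where I: "I \<subseteq> {..<m}" "is_affine Z (I - {k}) X \<mu>" "is_affine Z (I - {k}) X \<nu>"
    "lcont X \<mu>" "lcont X \<nu>" "\<forall>x\<in>X. Fin 0 \<le> \<mu> x \<and> Fin 0 \<le> \<nu> x"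
    "A = {a \<in> FI Z I. trunc k a \<in> X \<and> \<mu> (trunc k a) \<le> a k \<and> a k \<le> \<nu> (trunc k a) \<and> congr Z e (a k) \<rho> NN}"
    by (rule presE)
  have "I = {..<m}" using I_full[OF I(1) I(7) assms] .
  moreover have "{..<m} - {k} = {..<k}" using mk by auto
  ultimately show "is_affine Z {..<k} X \<mu>" "is_affine Z {..<k} X \<nu>" "lcont X \<mu>" "lcont X \<nu>"
    using I by simp_all
qed

lemma X_sub: "X \<subseteq> FI Z {..<k}"
proof
  fix x assume "x \<in> X"
  then obtain a where a: "a \<in> A" "x = trunc k a" unfolding socle_def by blast
  then have "a \<in> FI Z {..<m}" using AZ by blast
  then show "x \<in> FI Z {..<k}" using a(2) mk unfolding FI_iff trunc_def by auto
qed

lemma X_FI: "x \<in> X \<Longrightarrow> x \<in> FI Z {..<k}"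
  using X_sub by blast

lemma X_PInf: "x \<in> X \<Longrightarrow> i \<ge> k \<Longrightarrow> x i = PInf"
  using X_FI unfolding FI_iff by simp

lemma X_fin: "x \<in> X \<Longrightarrow> i < k \<Longrightarrow> x i \<in> Fin ` Z"
  using X_FI unfolding FI_iff by simp

lemma trunc_upd: "trunc k (x(k := c)) = trunc k x"
  by (simp add: trunc_def fun_eq_iff)

lemma trunc_id: "(\<And>i. i \<ge> k \<Longrightarrow> x i = PInf) \<Longrightarrow> trunc k x = x"
  by (auto simp add: trunc_def fun_eq_iff)

lemma X_trunc: "x \<in> X \<Longrightarrow> trunc k x = x"
  using trunc_id X_PInf by blast

lemma upd_FI: "x \<in> X \<Longrightarrow> y \<in> Z \<Longrightarrow> x(k := Fin y) \<in> FI Z {..<m}"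
  using X_fin X_PInf mk unfolding FI_iff by (auto simp: less_Suc_eq)

lemma upd_A: "x \<in> X \<Longrightarrow> y \<in> Z \<Longrightarrow>
   (x(k := Fin y) \<in> A \<longleftrightarrow> \<mu> x \<le> Fin y \<and> Fin y \<le> \<nu> x \<and> y - r0 \<in> nmul NN ` Z)"
  using A_iff[of "x(k := Fin y)"] upd_FI[of x y] X_trunc[of x] by (simp add: trunc_upd congr_def)

lemma A_decomp: "a \<in> A \<Longrightarrow> trunc k a \<in> X \<and> (\<exists>y\<in>Z. a k = Fin y \<and> a = (trunc k a)(k := Fin y))"
proof -
  assume a: "a \<in> A"
  then have X: "trunc k a \<in> X" unfolding socle_def by blast
  have "a \<in> FI Z {..<m}" using a AZ by blast
  then have am: "a k \<in> Fin ` Z" "\<And>i. i \<ge> m \<Longrightarrow> a i = PInf" unfolding FI_iff using mk by auto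
  then obtain y where y: "y \<in> Z" "a k = Fin y" by blast
  have "a = (trunc k a)(k := Fin y)"
  proof
    fix i show "a i = ((trunc k a)(k := Fin y)) i"
      using y am(2)[of i] mk by (cases "i < k"; cases "i = k") (auto simp: trunc_def)
  qed
  then show ?thesis using X y by blast
qed

lemma not_A_PInf: "a \<in> A \<Longrightarrow> a k \<noteq> PInf"
  using A_decomp by fastforce

lemma f_upd: "x(k := Fin y) \<in> A \<Longrightarrow> f (x(k := Fin y)) = Fin (SS x + rsc (\<alpha> k) y)"
proof -
  assume a: "x(k := Fin y) \<in> A"
  have "(\<Sum>i<m. rsc (\<alpha> i) (the_fin ((x(k := Fin y)) i))) = (\<Sum>i<k. rsc (\<alpha> i) (the_fin (x i))) + rsc (\<alpha> k) y"
    by (simp add: mk)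
  then show ?thesis using f_eq a by (simp add: add.assoc)
qed

lemma bnd_fin: assumes x: "x \<in> X" shows "bnd x \<noteq> PInf"
proof -
  obtain a where a: "a \<in> A" "x = trunc k a" using x unfolding socle_def by blast
  from A_decomp[OF a(1)] obtain ya where ya: "ya \<in> Z" "a k = Fin ya" "a = (trunc k a)(k := Fin ya)" by blast
  have "x(k := Fin ya) = a" using ya(3) a(2) by simp
  then have aA: "x(k := Fin ya) \<in> A" using a(1) by simp
  then have mu: "\<mu> x \<le> Fin ya" "Fin ya \<le> \<nu> x" "ya - r0 \<in> nmul NN ` Z" using upd_A[OF x ya(1)] by simp_all
  show ?thesis
  proof (cases "0 \<le> \<alpha> k")
    case True then show ?thesis using mu by auto
  next
    case neg: False
    show ?thesis
    proof
      assume "bnd x = PInf"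
      then have nuP: "\<nu> x = PInf" using neg by simp
      have big: "\<exists>y\<in>Z. b < y \<and> ya \<le> y \<and> x(k := Fin y) \<in> A" for b
      proof -
        obtain y where y: "y \<in> Z" "y - r0 \<in> nmul NN ` Z" "max (b + e) ya \<le> y"
          using window_lo[OF NN1 r0Z, of "max (b + e) ya"] by blast
        have "b < b + e" using epos by simp
        moreover have "b + e \<le> y" using y(3) by simp
        ultimately have "b < y" by (rule less_le_trans)
        moreover have "ya \<le> y" using y(3) by simp
        moreover have "\<mu> x \<le> Fin y" using order_trans[OF mu(1)] \<open>ya \<le> y\<close> by simp
        then have "x(k := Fin y) \<in> A" using upd_A[OF x y(1)] nuP y(2) by simp
        ultimately show ?thesis using y(1) by blast
      qed
      have xk: "x(k := PInf) = x" using X_PInf[OF x, of k] by (simp add: fun_upd_idem)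
      have xnA: "x \<notin> A" using not_A_PInf X_PInf[OF x, of k] by blast
      have xcl: "x \<in> closure A"
        unfolding closure_iff_nhds_not_empty
      proof (intro allI impI)
        fix B T assume T: "T \<subseteq> B" "open T" "x \<in> T"
        obtain b where b: "\<forall>y. b < y \<longrightarrow> x(k := Fin y) \<in> T" using large_lemma[OF T(2)] xk T(3) by metis
        obtain y where y: "y \<in> Z" "b < y" "x(k := Fin y) \<in> A" using big by blast
        then have "x(k := Fin y) \<in> A \<inter> B" using b T(1) by blast
        then show "A \<inter> B \<noteq> {}" by blast
      qed
      have lim: "filterlim f (nhds PInf) (at x within A)" using finf xcl xnA by blast
      then have "eventually (\<lambda>z. Fin (SS x + rsc (\<alpha> k) ya) < f z) (at x within A)"
        using tendsto_PInf_iff by blast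
      then obtain T where T: "open T" "x \<in> T" "\<forall>z\<in>T. z \<noteq> x \<longrightarrow> z \<in> A \<longrightarrow> Fin (SS x + rsc (\<alpha> k) ya) < f z"
        unfolding eventually_at_topological by blast
      obtain b where b: "\<forall>y. b < y \<longrightarrow> x(k := Fin y) \<in> T" using large_lemma[OF T(1)] xk T(2) by metis
      obtain y where y: "y \<in> Z" "b < y" "ya \<le> y" "x(k := Fin y) \<in> A" using big by blast
      have ne: "x(k := Fin y) \<noteq> x"
      proof
        assume "x(k := Fin y) = x"
        then have "(x(k := Fin y)) k = x k" by simp
        then show False using X_PInf[OF x, of k] by simp
      qed
      have "Fin (SS x + rsc (\<alpha> k) ya) < f (x(k := Fin y))" using T(3) b y ne by blast
      then have "rsc (\<alpha> k) ya < rsc (\<alpha> k) y" using f_upd[OF y(4)] by simp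
      moreover have "rsc (\<alpha> k) y \<le> rsc (\<alpha> k) ya" using rsc_antimono[of "\<alpha> k" ya y] neg y(3) by simp
      ultimately show False by simp
    qed
  qed
qed

lemma bnd_eq: "x \<in> X \<Longrightarrow> bnd x = Fin (the_fin (bnd x))"
  using bnd_fin omega_neq_PInf by blast

end

context cellctx begin

lemma Wform: "rsc c (nmul NN e) = rsc (c * of_nat NN) e"
  by (simp add: rsc_mult rsc_nat)

lemma A_point:
  assumes a: "a \<in> A"
  obtains ya where "ya \<in> Z" "trunc k a \<in> X" "a = (trunc k a)(k := Fin ya)"
    "\<mu> (trunc k a) \<le> Fin ya" "Fin ya \<le> \<nu> (trunc k a)" "ya - r0 \<in> nmul NN ` Z"
proof -
  from A_decomp[OF a] obtain ya where ya: "trunc k a \<in> X" "ya \<in> Z" "a = (trunc k a)(k := Fin ya)" by blast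
  then have "(trunc k a)(k := Fin ya) \<in> A" using a by simp
  then have "\<mu> (trunc k a) \<le> Fin ya" "Fin ya \<le> \<nu> (trunc k a)" "ya - r0 \<in> nmul NN ` Z"
    using upd_A[OF ya(1) ya(2)] by simp_all
  then show ?thesis using that ya by blast
qed

lemma X_point:
  assumes x: "x \<in> X"
  obtains ya where "ya \<in> Z" "x(k := Fin ya) \<in> A"
    "\<mu> x \<le> Fin ya" "Fin ya \<le> \<nu> x" "ya - r0 \<in> nmul NN ` Z"
proof -
  obtain a where a: "a \<in> A" "x = trunc k a" using x unfolding socle_def by blast
  obtain ya where ya: "ya \<in> Z" "a = x(k := Fin ya)"
    "\<mu> x \<le> Fin ya" "Fin ya \<le> \<nu> x" "ya - r0 \<in> nmul NN ` Z"
    using A_point[OF a(1)] a(2) by blast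
  have "x(k := Fin ya) \<in> A" using ya(2) a(1) by simp
  then show ?thesis using that ya by blast
qed

lemma ext_pt:
  assumes x: "x \<in> X"
  shows "\<exists>y. y \<in> Z \<and> x(k := Fin y) \<in> A \<and> the_fin (bnd x) - nmul NN e < y \<and> y < the_fin (bnd x) + nmul NN e
     \<and> rsc (\<alpha> k) y \<le> rsc (\<alpha> k) (the_fin (bnd x)) + W"
proof -
  obtain ya where mu: "ya \<in> Z" "x(k := Fin ya) \<in> A"
    "\<mu> x \<le> Fin ya" "Fin ya \<le> \<nu> x" "ya - r0 \<in> nmul NN ` Z" using X_point[OF x] by blast
  define bv where "bv = the_fin (bnd x)"
  have bx: "bnd x = Fin bv" using bnd_eq[OF x] bv_def by simp
  have npos: "0 < nmul NN e" using nmul_pos[OF epos] NN1 by simp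
  show ?thesis
  proof (cases "0 \<le> \<alpha> k")
    case True
    then have mux: "\<mu> x = Fin bv" using bx by simp
    obtain y where y: "y \<in> Z" "y - r0 \<in> nmul NN ` Z" "bv \<le> y" "y < bv + nmul NN e"
      using window_lo[OF NN1 r0Z, of bv] by blast
    have bvya: "bv \<le> ya" using mu(3) mux by simp
    have "y \<le> ya"
    proof (rule ccontr)
      assume "\<not> y \<le> ya" then have "ya < y" by simp
      moreover have "bv + nmul NN e \<le> ya + nmul NN e" using bvya by simp
      then have "y < ya + nmul NN e" by (rule less_le_trans[OF y(4)])
      ultimately show False using cong_gap[OF NN1 y(2) mu(5)] by blast
    qed
    then have "Fin y \<le> \<nu> x" using mu(4) order_trans[of "Fin y" "Fin ya"] by simp
    then have inA: "x(k := Fin y) \<in> A" using upd_A[OF x y(1)] mux y(2) y(3) by simp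
    have "bv - nmul NN e < bv" using npos by simp
    then have lo: "bv - nmul NN e < y" using y(3) by (rule less_le_trans)
    have "rsc (\<alpha> k) (y - bv) \<le> rsc (\<alpha> k) (nmul NN e)"
      using rsc_mono[OF True, of "y - bv" "nmul NN e"] y(4) by (simp add: algebra_simps)
    also have "\<dots> = W" using True by (simp add: Wform)
    finally have "rsc (\<alpha> k) y \<le> rsc (\<alpha> k) bv + W" by (simp add: rsc_diffx algebra_simps)
    then show ?thesis using y(1) inA lo y(4) bv_def by blast
  next
    case False
    then have nux: "\<nu> x = Fin bv" using bx by simp
    obtain y where y: "y \<in> Z" "y - r0 \<in> nmul NN ` Z" "bv - nmul NN e < y" "y \<le> bv"
      using window_hi[OF NN1 r0Z, of bv] by blast
    have bvya: "ya \<le> bv" using mu(4) nux by simp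
    have "ya \<le> y"
    proof (rule ccontr)
      assume "\<not> ya \<le> y" then have "y < ya" by simp
      moreover have "bv < y + nmul NN e" using y(3) by (simp add: diff_less_eq)
      then have "ya < y + nmul NN e" by (rule le_less_trans[OF bvya])
      ultimately show False using cong_gap[OF NN1 mu(5) y(2)] by blast
    qed
    then have "\<mu> x \<le> Fin y" using mu(3) order_trans[of "\<mu> x" "Fin ya"] by simp
    then have inA: "x(k := Fin y) \<in> A" using upd_A[OF x y(1)] nux y(2) y(4) by simp
    have "bv < bv + nmul NN e" using npos by simp
    then have hi: "y < bv + nmul NN e" by (rule le_less_trans[OF y(4)])
    have "rsc (- \<alpha> k) (bv - y) \<le> rsc (- \<alpha> k) (nmul NN e)"
      using rsc_mono[of "- \<alpha> k" "bv - y" "nmul NN e"] False y(3) by (simp add: algebra_simps)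
    also have "\<dots> = W" using False by (simp add: Wform)
    finally have "rsc (\<alpha> k) y \<le> rsc (\<alpha> k) bv + W" by (simp add: rsc_diffx rsc_minus_r algebra_simps)
    then show ?thesis using y(1) inA hi y(3) bv_def by blast
  qed
qed

lemma fhat_le: assumes a: "a \<in> A" shows "fhat (trunc k a) \<le> f a"
proof -
  obtain ya where ya: "ya \<in> Z" "trunc k a \<in> X" "a = (trunc k a)(k := Fin ya)"
    "\<mu> (trunc k a) \<le> Fin ya" "Fin ya \<le> \<nu> (trunc k a)" "ya - r0 \<in> nmul NN ` Z"
    using A_point[OF a] by blast
  define x where "x = trunc k a"
  have x: "x \<in> X" using ya x_def by simp
  define bv where "bv = the_fin (bnd x)"
  have bx: "bnd x = Fin bv" using bnd_eq[OF x] bv_def by simp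
  have fa: "f a = Fin (SS x + rsc (\<alpha> k) ya)" using f_upd[of x ya] a ya(3) x_def by simp
  have "rsc (\<alpha> k) bv \<le> rsc (\<alpha> k) ya"
  proof (cases "0 \<le> \<alpha> k")
    case True
    then have "bv \<le> ya" using bx ya(4) x_def by simp
    then show ?thesis using rsc_mono True by blast
  next
    case False
    then have "ya \<le> bv" using bx ya(5) x_def by simp
    then show ?thesis using rsc_antimono[of "\<alpha> k" ya bv] False by simp
  qed
  then have "Fin (SS x + rsc (\<alpha> k) (the_fin (bnd x))) \<le> Fin (SS x + rsc (\<alpha> k) ya)"
    unfolding bv_def by (intro iffD2[OF Fin_le_Fin] add_left_mono)
  then show ?thesis using fa unfolding x_def by (simp only:)
qed

lemma f_fin: "a \<in> A \<Longrightarrow> f a = Fin (the_fin (f a))"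
  using f_eq by simp

lemma lower_bound:
  assumes a: "a \<in> A" and a0: "a0 \<in> A" "\<forall>b\<in>A. f a0 \<le> f b"
  shows "Fin (the_fin (f a0) - W) \<le> fhat (trunc k a)"
proof -
  define x where "x = trunc k a"
  have x: "x \<in> X" using a x_def unfolding socle_def by blast
  obtain y where y: "y \<in> Z" "x(k := Fin y) \<in> A" "rsc (\<alpha> k) y \<le> rsc (\<alpha> k) (the_fin (bnd x)) + W"
    using ext_pt[OF x] by blast
  have "f a0 \<le> f (x(k := Fin y))" using a0 y(2) by blast
  moreover obtain v where v: "f a0 = Fin v" using f_fin[OF a0(1)] by blast
  ultimately have "the_fin (f a0) \<le> SS x + rsc (\<alpha> k) y" using f_upd[OF y(2)] by simp
  also have "\<dots> \<le> SS x + rsc (\<alpha> k) (the_fin (bnd x)) + W" using y(3) by (simp add: add.assoc add_left_mono)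
  finally have ineq: "the_fin (f a0) \<le> SS x + rsc (\<alpha> k) (the_fin (bnd x)) + W" .
  define bv where "bv = the_fin (bnd x)"
  have "Fin (the_fin (f a0) - W) \<le> Fin (SS x + rsc (\<alpha> k) bv)"
    using ineq unfolding bv_def[symmetric] by (simp add: algebra_simps)
  then have "Fin (the_fin (f a0) - W) \<le> fhat x" unfolding bv_def .
  then show ?thesis unfolding x_def .
qed

lemma iso:
  assumes p: "p \<in> X"
  obtains U where "open U" "p \<in> U" "U \<inter> X \<subseteq> {p}"
proof -
  define U where "U = {z. \<forall>i\<in>{..<k}. z i \<in> {Fin (the_fin (p i) - e) <..< Fin (the_fin (p i) + e)}}"
  have "open U" unfolding U_def by (rule open_box) auto
  moreover have "p \<in> U"
  proof -
    have "p i \<in> {Fin (the_fin (p i) - e) <..< Fin (the_fin (p i) + e)}" if ik: "i < k" for i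
    proof -
      obtain z where "p i = Fin z" using X_fin[OF p ik] by blast
      then show ?thesis using epos by simp
    qed
    then show ?thesis unfolding U_def by simp
  qed
  moreover have "U \<inter> X \<subseteq> {p}"
  proof
    fix y assume y: "y \<in> U \<inter> X"
    have "y i = p i" for i
    proof (cases "i < k")
      case True
      obtain z where z: "z \<in> Z" "p i = Fin z" using X_fin[OF p True] by blast
      obtain w where w: "w \<in> Z" "y i = Fin w" using X_fin[of y i] y True by blast
      have "y i \<in> {Fin (the_fin (p i) - e) <..< Fin (the_fin (p i) + e)}" using y True unfolding U_def by blast
      then have "z - e < w" "w < z + e" using z w by simp_all
      then show ?thesis using Zdiscrete[OF w(1) z(1)] z w by simp
    next
      case False
      then show ?thesis using X_PInf[OF p, of i] X_PInf[of y i] y by simp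
    qed
    then show "y \<in> {p}" by (simp add: fun_eq_iff)
  qed
  ultimately show ?thesis using that by blast
qed

lemma X_bot: "p \<in> X \<Longrightarrow> at p within X = bot"
proof -
  assume p: "p \<in> X"
  obtain U where U: "open U" "p \<in> U" "U \<inter> X \<subseteq> {p}" using iso[OF p] by blast
  have "\<not> p islimpt X" unfolding islimpt_def using U by blast
  then show ?thesis using trivial_limit_within by blast
qed

lemma X_ne_A: "X \<noteq> {} \<Longrightarrow> A \<noteq> {}" unfolding socle_def by blast

lemma bnd_affine:
  assumes "X \<noteq> {}"
  shows "\<exists>c0 c. \<forall>x\<in>X. bnd x = Fin (c0 + (\<Sum>i<k. rsc (c i) (the_fin (x i))))"
proof -
  have aff: "is_affine Z {..<k} X (\<lambda>x. bnd x)"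
    using affine_full[OF X_ne_A[OF assms]] by (cases "0 \<le> \<alpha> k") simp_all
  obtain x0 where x0: "x0 \<in> X" using assms by blast
  have "\<not> (\<forall>y\<in>X. bnd y = PInf)" using bnd_fin[OF x0] x0 by blast
  then show ?thesis using aff unfolding is_affine_def by blast
qed

lemma fhat_repr:
  assumes "X \<noteq> {}"
  shows "\<exists>\<beta>' \<alpha>'. \<forall>x\<in>X. fhat x = Fin (\<beta>' + (\<Sum>i<k. rsc (\<alpha>' i) (the_fin (x i))))"
proof -
  obtain c0 c where c: "\<forall>x\<in>X. bnd x = Fin (c0 + (\<Sum>i<k. rsc (c i) (the_fin (x i))))"
    using bnd_affine[OF assms] by blast
  have "fhat x = Fin ((\<beta> + rsc (\<alpha> k) c0) + (\<Sum>i<k. rsc (\<alpha> i + \<alpha> k * c i) (the_fin (x i))))" if x: "x \<in> X" for x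
  proof -
    have "rsc (\<alpha> k) (the_fin (bnd x)) = rsc (\<alpha> k) c0 + (\<Sum>i<k. rsc (\<alpha> k * c i) (the_fin (x i)))"
      using c x by (simp add: rsc_addx rsc_sum rsc_mult)
    moreover have "(\<Sum>i<k. rsc (\<alpha> i + \<alpha> k * c i) (the_fin (x i)))
        = (\<Sum>i<k. rsc (\<alpha> i) (the_fin (x i))) + (\<Sum>i<k. rsc (\<alpha> k * c i) (the_fin (x i)))"
      by (simp add: rsc_add_r sum.distrib)
    ultimately show ?thesis by (simp add: algebra_simps)
  qed
  then show ?thesis
    by (intro exI[of _ "\<beta> + rsc (\<alpha> k) c0"] exI[of _ "\<lambda>i. \<alpha> i + \<alpha> k * c i"] ballI) simp
qed

lemma fhat_affine: "is_affine Z {..<k} X fhat"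
proof (cases "X = {}")
  case True then show ?thesis using X_sub unfolding is_affine_def by simp
next
  case False
  then obtain \<beta>' \<alpha>' where "\<forall>x\<in>X. fhat x = Fin (\<beta>' + (\<Sum>i<k. rsc (\<alpha>' i) (the_fin (x i))))"
    using fhat_repr by blast
  then show ?thesis using X_sub unfolding is_affine_def by blast
qed

end

context cellctx begin

lemma lim_X:
  assumes q: "q \<in> closure X" "q \<notin> X"
  shows "filterlim fhat (nhds PInf) (at q within X)"
proof -
  have qP: "q i = PInf" if ki: "k \<le> i" for i
  proof -
    have "X \<subseteq> {z. z i = PInf}" using X_PInf ki by blast
    then have "closure X \<subseteq> {z. z i = PInf}" by (rule closure_minimal) (rule closed_coord_eq)
    then show ?thesis using q(1) by blast
  qed
  have qtr: "trunc k q = q" using trunc_id qP by blast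
  have qnA: "q \<notin> A" using not_A_PInf qP[of k] by blast
  have Xne: "X \<noteq> {}" using q(1) by auto
  have nbot: "at q within X \<noteq> bot"
  proof -
    have "X - {q} = X" using q(2) by blast
    then show ?thesis using q(1) unfolding at_within_eq_bot_iff by simp
  qed
  have evX: "eventually (\<lambda>x. x \<in> X) (at q within X)" by (simp add: eventually_at_filter)
  define P where "P x y \<longleftrightarrow> y \<in> Z \<and> x(k := Fin y) \<in> A \<and> the_fin (bnd x) - nmul NN e < y
     \<and> y < the_fin (bnd x) + nmul NN e \<and> rsc (\<alpha> k) y \<le> rsc (\<alpha> k) (the_fin (bnd x)) + W" for x y
  define sx where "sx x = (SOME y. P x y)" for x
  have sxP: "P x (sx x)" if xX: "x \<in> X" for x
  proof -
    have "\<exists>y. P x y" using ext_pt[OF xX] unfolding P_def .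
    then show ?thesis unfolding sx_def by (rule someI_ex)
  qed
  obtain hb where hb: "continuous_on (closure X) hb" "\<forall>x\<in>X. hb x = bnd x"
  proof -
    have "lcont X (\<lambda>x. bnd x)" using affine_full[OF X_ne_A[OF Xne]] by (cases "0 \<le> \<alpha> k") simp_all
    then show ?thesis using that unfolding lcont_def by blast
  qed
  have tb: "((\<lambda>x. bnd x) \<longlongrightarrow> hb q) (at q within X)"
  proof -
    have "(hb \<longlongrightarrow> hb q) (at q within closure X)" using hb(1) q(1) unfolding continuous_on_def by blast
    then have 1: "(hb \<longlongrightarrow> hb q) (at q within X)" by (rule tendsto_within_subset) (rule closure_subset)
    have 2: "eventually (\<lambda>x. hb x = bnd x) (at q within X)" using evX hb(2) by (auto elim: eventually_mono)
    show ?thesis using 1 tendsto_cong[OF 2] by simp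
  qed
  have KEY: "eventually (\<lambda>x. x \<in> X \<longrightarrow> Fin L < f (x(k := Fin (sx x)))) (at q within X)" for L
  proof (cases "hb q")
    case PInf
    have tbP: "((\<lambda>x. bnd x) \<longlongrightarrow> PInf) (at q within X)" using tb PInf by simp
    define E where "E x = x(k := Fin (sx x))" for x
    have t1: "(E \<longlongrightarrow> q) (at q within X)"
    proof (rule tendsto_fun_coord)
      fix i
      show "((\<lambda>x. E x i) \<longlongrightarrow> q i) (at q within X)"
      proof (cases "i = k")
        case True
        have "eventually (\<lambda>x. Fin l < Fin (sx x)) (at q within X)" for l
        proof -
          have "eventually (\<lambda>x. Fin (l + nmul NN e) < bnd x) (at q within X)"
            using tbP unfolding tendsto_PInf_iff by blast
          then have "eventually (\<lambda>x. Fin (l + nmul NN e) < bnd x \<and> x \<in> X) (at q within X)"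
            using evX by (rule eventually_conj)
          then show ?thesis
          proof (rule eventually_mono)
            fix x assume x: "Fin (l + nmul NN e) < bnd x \<and> x \<in> X"
            define bv where "bv = the_fin (bnd x)"
            have bx: "bnd x = Fin bv" using bnd_eq x bv_def by blast
            have "l + nmul NN e < bv" using x bx by simp
            then have "l < bv - nmul NN e" by (simp add: less_diff_eq)
            moreover have "bv - nmul NN e < sx x" using sxP x unfolding P_def bv_def by blast
            ultimately show "Fin l < Fin (sx x)" by simp
          qed
        qed
        then have "((\<lambda>x. Fin (sx x)) \<longlongrightarrow> PInf) (at q within X)" unfolding tendsto_PInf_iff by blast
        then show ?thesis using True qP[of k] unfolding E_def by simp
      next
        case False
        then show ?thesis unfolding E_def using tendsto_coord[of i q X] by simp
      qed
    qed
    have EA: "eventually (\<lambda>x. E x \<in> A) (at q within X)"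
      using evX by (rule eventually_mono) (use sxP in \<open>simp add: P_def E_def\<close>)
    have "eventually (\<lambda>x. E x \<in> closure A) (at q within X)"
      using EA by (rule eventually_mono) (use closure_subset in blast)
    then have qA: "q \<in> closure A" using Lim_in_closed_set[OF closed_closure _ nbot t1] by blast
    have fl: "filterlim f (nhds PInf) (at q within A)" using finf qA qnA by blast
    have El: "filterlim E (at q within A) (at q within X)"
    proof (rule filterlim_at_withinI[OF t1])
      show "eventually (\<lambda>x. E x \<in> A - {q}) (at q within X)"
        using EA by (rule eventually_mono) (use qnA in blast)
    qed
    have "filterlim (\<lambda>x. f (E x)) (nhds PInf) (at q within X)" by (rule filterlim_compose[OF fl El])
    then have "eventually (\<lambda>x. Fin L < f (E x)) (at q within X)" unfolding tendsto_PInf_iff by blast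
    then show ?thesis unfolding E_def by (rule eventually_mono) simp
  next
    case (Fin c)
    have tbc: "((\<lambda>x. bnd x) \<longlongrightarrow> Fin c) (at q within X)" using tb Fin by simp
    have ce: "c - e < c" "c < c + e" using epos by simp_all
    have w1: "eventually (\<lambda>x. Fin (c - e) < bnd x) (at q within X)"
      using tbc ce unfolding order_tendsto_iff by simp
    have w2: "eventually (\<lambda>x. bnd x < Fin (c + e)) (at q within X)"
      using tbc ce unfolding order_tendsto_iff by simp
    define lo where "lo = c - e - nmul NN e"
    define K where "K = NN + NN + 2"
    define T where "T = Z \<inter> {lo .. lo + nmul K e}"
    have fT: "finite T" unfolding T_def by (rule finite_window)
    have loK: "lo + nmul K e = c + e + nmul NN e"
      by (simp add: lo_def K_def nmul_add_nat numeral_2_eq_2 nmul_Suc algebra_simps)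
    have inT: "sx x \<in> T" if x: "x \<in> X" "Fin (c - e) < bnd x" "bnd x < Fin (c + e)" for x
    proof -
      define bv where "bv = the_fin (bnd x)"
      have bx: "bnd x = Fin bv" using bnd_eq[OF x(1)] bv_def by simp
      have b1: "c - e < bv" "bv < c + e" using x bx by simp_all
      have s: "sx x \<in> Z" "bv - nmul NN e < sx x" "sx x < bv + nmul NN e"
        using sxP[OF x(1)] unfolding P_def bv_def by blast+
      have "lo < bv - nmul NN e" unfolding lo_def using b1(1) by (rule diff_strict_right_mono)
      then have "lo < sx x" using s(2) by (rule less_trans)
      moreover have "bv + nmul NN e < c + e + nmul NN e" using b1(2) by simp
      then have "sx x < lo + nmul K e" unfolding loK using s(3) by (metis less_trans)
      ultimately show ?thesis unfolding T_def using s(1) by (simp add: less_imp_le)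
    qed
    have evt: "\<forall>t\<in>T. eventually (\<lambda>x. x \<in> X \<longrightarrow> x(k := Fin t) \<in> A \<longrightarrow> Fin L < f (x(k := Fin t))) (at q within X)"
    proof
      fix t assume t: "t \<in> T"
      define Y where "Y = {x \<in> X. x(k := Fin t) \<in> A}"
      have evY: "eventually (\<lambda>x. Fin L < f (x(k := Fin t))) (at q within Y)"
      proof (cases "at q within Y = bot")
        case True then show ?thesis by simp
      next
        case False
        then have "q \<in> closure (Y - {q})" unfolding at_within_eq_bot_iff by simp
        then have qY: "q \<in> closure Y" using closure_mono[of "Y - {q}" Y] by blast
        define g where "g x = x(k := Fin t)" for x
        have gcl: "g ` closure Y \<subseteq> closure A"
        proof (rule image_closure_subset)
          show "continuous_on (closure Y) g" unfolding g_def by (rule continuous_on_subset[OF cont_upd]) simp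
          show "closed (closure A)" by simp
          show "g ` Y \<subseteq> closure A" unfolding Y_def g_def using closure_subset by blast
        qed
        then have gqA: "g q \<in> closure A" using qY by blast
        have gqnA: "g q \<notin> A"
        proof
          assume "g q \<in> A"
          then have "trunc k (g q) \<in> X" using A_iff by blast
          then show False using q(2) qtr trunc_upd[of q "Fin t"] unfolding g_def by simp
        qed
        have fl: "filterlim f (nhds PInf) (at (g q) within A)" using finf gqA gqnA by blast
        have gl: "filterlim g (at (g q) within A) (at q within Y)"
        proof (rule filterlim_at_withinI)
          show "(g \<longlongrightarrow> g q) (at q within Y)" unfolding g_def by (rule tendsto_upd)
          have "eventually (\<lambda>x. x \<in> Y) (at q within Y)" by (simp add: eventually_at_filter)
          then show "eventually (\<lambda>x. g x \<in> A - {g q}) (at q within Y)"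
            by (rule eventually_mono) (use gqnA in \<open>auto simp: Y_def g_def\<close>)
        qed
        have "filterlim (\<lambda>x. f (g x)) (nhds PInf) (at q within Y)" by (rule filterlim_compose[OF fl gl])
        then show ?thesis unfolding tendsto_PInf_iff g_def by blast
      qed
      then show "eventually (\<lambda>x. x \<in> X \<longrightarrow> x(k := Fin t) \<in> A \<longrightarrow> Fin L < f (x(k := Fin t))) (at q within X)"
        unfolding eventually_at_filter Y_def by (rule eventually_mono) simp
    qed
    have ev_all: "eventually (\<lambda>x. \<forall>t\<in>T. x \<in> X \<longrightarrow> x(k := Fin t) \<in> A \<longrightarrow> Fin L < f (x(k := Fin t))) (at q within X)"
      by (rule eventually_ball_finite[OF fT evt])
    have "eventually (\<lambda>x. (\<forall>t\<in>T. x \<in> X \<longrightarrow> x(k := Fin t) \<in> A \<longrightarrow> Fin L < f (x(k := Fin t)))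
        \<and> (Fin (c - e) < bnd x \<and> bnd x < Fin (c + e))) (at q within X)"
      using ev_all eventually_conj[OF w1 w2] by (rule eventually_conj)
    then show ?thesis
    proof (rule eventually_mono)
      fix x assume x: "(\<forall>t\<in>T. x \<in> X \<longrightarrow> x(k := Fin t) \<in> A \<longrightarrow> Fin L < f (x(k := Fin t)))
        \<and> (Fin (c - e) < bnd x \<and> bnd x < Fin (c + e))"
      show "x \<in> X \<longrightarrow> Fin L < f (x(k := Fin (sx x)))"
      proof
        assume xX: "x \<in> X"
        have "sx x \<in> T" using inT xX x by blast
        moreover have "x(k := Fin (sx x)) \<in> A" using sxP[OF xX] unfolding P_def by blast
        ultimately show "Fin L < f (x(k := Fin (sx x)))" using x xX by blast
      qed
    qed
  qed
  show ?thesis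
    unfolding tendsto_PInf_iff
  proof
    fix Lv
    have "eventually (\<lambda>x. x \<in> X \<longrightarrow> Fin (Lv + W) < f (x(k := Fin (sx x)))) (at q within X)" by (rule KEY)
    then have "eventually (\<lambda>x. (x \<in> X \<longrightarrow> Fin (Lv + W) < f (x(k := Fin (sx x)))) \<and> x \<in> X) (at q within X)"
      using evX by (rule eventually_conj)
    then show "eventually (\<lambda>x. Fin Lv < fhat x) (at q within X)"
    proof (rule eventually_mono)
      fix x assume x: "(x \<in> X \<longrightarrow> Fin (Lv + W) < f (x(k := Fin (sx x)))) \<and> x \<in> X"
      then have xX: "x \<in> X" and lt: "Fin (Lv + W) < f (x(k := Fin (sx x)))" by blast+
      have Px: "P x (sx x)" using sxP[OF xX] .
      define bv where "bv = the_fin (bnd x)"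
      have inA: "x(k := Fin (sx x)) \<in> A" and Wi: "rsc (\<alpha> k) (sx x) \<le> rsc (\<alpha> k) bv + W"
        using Px unfolding P_def bv_def by blast+
      have a: "Lv + W < SS x + rsc (\<alpha> k) (sx x)" using lt f_upd[OF inA] by simp
      have c: "SS x + rsc (\<alpha> k) (sx x) \<le> SS x + (rsc (\<alpha> k) bv + W)" using Wi by (rule add_left_mono)
      have "Lv + W < SS x + (rsc (\<alpha> k) bv + W)" using a c by (rule less_le_trans)
      then have "Lv + W < (SS x + rsc (\<alpha> k) bv) + W" by (simp only: add.assoc)
      then have "Lv < SS x + rsc (\<alpha> k) bv" by simp
      then have "Fin Lv < Fin (SS x + rsc (\<alpha> k) bv)" by simp
      then show "Fin Lv < fhat x" unfolding bv_def .
    qed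
  qed
qed

lemma fhat_lcont: "lcont X fhat"
proof -
  define h where "h y = (if y \<in> X then fhat y else PInf)" for y
  have "continuous_on (closure X) h"
    unfolding continuous_on_topological
  proof (intro ballI allI impI)
    fix x B assume x: "x \<in> closure X" and B: "open B" "h x \<in> B"
    show "\<exists>A'. open A' \<and> x \<in> A' \<and> (\<forall>y\<in>closure X. y \<in> A' \<longrightarrow> h y \<in> B)"
    proof (cases "x \<in> X")
      case True
      obtain U where U: "open U" "x \<in> U" "U \<inter> X \<subseteq> {x}" using iso[OF True] by blast
      have Ucl: "U \<inter> closure X \<subseteq> {x}" by (rule isolated_closure[OF U(1) U(3)])
      show ?thesis
      proof (intro exI[of _ U] conjI ballI impI)
        fix y assume "y \<in> closure X" "y \<in> U"
        then have "y = x" using Ucl by blast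
        then show "h y \<in> B" using B(2) by simp
      qed (use U in auto)
    next
      case False
      then have hx: "h x = PInf" unfolding h_def by simp
      obtain b where b: "b < PInf" "{b<..PInf} \<subseteq> B" using open_left[OF B(1), of PInf "Fin 0"] B(2) hx by auto
      have "b \<noteq> PInf" using b(1) by (simp add: less_PInf_iff)
      then obtain bv where bv: "b = Fin bv" by (cases b) auto
      have "eventually (\<lambda>y. Fin bv < fhat y) (at x within X)" using lim_X[OF x False] unfolding tendsto_PInf_iff by blast
      then obtain S where S: "open S" "x \<in> S" "\<forall>y\<in>S. y \<noteq> x \<longrightarrow> y \<in> X \<longrightarrow> Fin bv < fhat y"
        unfolding eventually_at_topological by blast
      show ?thesis
      proof (intro exI[of _ S] conjI ballI impI)
        fix y assume y: "y \<in> closure X" "y \<in> S"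
        show "h y \<in> B"
        proof (cases "y \<in> X")
          case True
          then have "y \<noteq> x" using False by blast
          then have "Fin bv < fhat y" using S y True by blast
          then have "h y \<in> {b<..PInf}" using True bv unfolding h_def by simp
          then show ?thesis using b(2) by blast
        next
          case False
          then have "h y = PInf" unfolding h_def by simp
          then show ?thesis using B(2) hx by simp
        qed
      qed (use S in auto)
    qed
  qed
  moreover have "\<forall>y\<in>X. h y = fhat y" unfolding h_def by simp
  ultimately show ?thesis unfolding lcont_def by (intro exI[of _ h] conjI)
qed

lemma fhat_front: "\<forall>p\<in>pfrontier X. filterlim fhat (nhds PInf) (at p within X)"
proof
  fix p assume p: "p \<in> pfrontier X"
  show "filterlim fhat (nhds PInf) (at p within X)"
  proof (cases "p \<in> X")
    case True
    then have "at p within X = bot" by (rule X_bot)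
    then show ?thesis by (rule Lim_trivial_limit)
  next
    case False
    have "pfrontier X \<subseteq> closure (closure X)" unfolding pfrontier_def by (rule closure_mono) blast
    then have "p \<in> closure X" using p by (simp add: subsetD)
    then show ?thesis using lim_X False by blast
  qed
qed

lemma fhat_finf: "\<forall>p\<in>closure X - X. filterlim fhat (nhds PInf) (at p within X)"
  using lim_X by blast

end


lemma denom_int:
  fixes \<alpha> :: "nat \<Rightarrow> rat"
  shows "\<exists>D::int. D > 0 \<and> (\<forall>i<m. of_int D * \<alpha> i \<in> \<int>)"
proof -
  define d where "d i = snd (quotient_of (\<alpha> i))" for i
  define p where "p i = fst (quotient_of (\<alpha> i))" for i
  have q: "quotient_of (\<alpha> i) = (p i, d i)" for i by (simp add: p_def d_def)
  have dpos: "d i > 0" for i using quotient_of_denom_pos[OF q] .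
  have ad: "\<alpha> i = of_int (p i) / of_int (d i)" for i using quotient_of_div[OF q] .
  define D where "D = prod d {..<m}"
  have "D > 0" unfolding D_def using dpos by (simp add: prod_pos)
  moreover have "of_int D * \<alpha> i \<in> \<int>" if i: "i < m" for i
  proof -
    have "D = d i * prod d ({..<m} - {i})" unfolding D_def using i by (simp add: prod.remove)
    then have "of_int D * \<alpha> i = of_int (prod d ({..<m} - {i}) * p i)"
      using ad[of i] dpos[of i] by (simp add: field_simps)
    then show ?thesis by (simp only: Ints_of_int)
  qed
  ultimately show ?thesis by blast
qed

context cellctx begin

lemma min_from:
  assumes x0: "x0 \<in> X" and mn: "\<forall>x\<in>X. fhat x0 \<le> fhat x"
  shows "\<exists>a0\<in>A. \<forall>b\<in>A. f a0 \<le> f b"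
proof -
  define Fv where "Fv a = \<beta> + (\<Sum>i<m. rsc (\<alpha> i) (the_fin (a i)))" for a
  have fF: "f a = Fin (Fv a)" if "a \<in> A" for a using f_eq that Fv_def by simp
  define bv0 where "bv0 = the_fin (bnd x0)"
  define Mv where "Mv = SS x0 + rsc (\<alpha> k) bv0"
  have fh0: "fhat x0 = Fin Mv" unfolding Mv_def bv0_def by simp
  obtain ys where ys: "ys \<in> Z" "x0(k := Fin ys) \<in> A" "rsc (\<alpha> k) ys \<le> rsc (\<alpha> k) bv0 + W"
    using ext_pt[OF x0] unfolding bv0_def by blast
  define bs where "bs = x0(k := Fin ys)"
  have bsA: "bs \<in> A" using ys(2) bs_def by simp
  define Bv where "Bv = Fv bs"
  have "Fin Bv = Fin (SS x0 + rsc (\<alpha> k) ys)" using fF[OF bsA] f_upd[OF ys(2)] Bv_def bs_def by simp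
  then have "Bv = SS x0 + rsc (\<alpha> k) ys" by simp
  also have "\<dots> \<le> SS x0 + (rsc (\<alpha> k) bv0 + W)" using ys(3) by (rule add_left_mono)
  finally have Bv_le: "Bv \<le> Mv + W" unfolding Mv_def by (simp add: add.assoc)
  have low: "Mv \<le> Fv a" if a: "a \<in> A" for a
  proof -
    have "trunc k a \<in> X" using a unfolding socle_def by blast
    then have "fhat x0 \<le> fhat (trunc k a)" using mn by blast
    also have "\<dots> \<le> f a" by (rule fhat_le[OF a])
    finally show ?thesis using fh0 fF[OF a] by simp
  qed
  obtain D :: int where D: "D > 0" "\<forall>i<m. of_int D * \<alpha> i \<in> \<int>" using denom_int by blast
  define \<phi> where "\<phi> v = rsc (of_int D) (v - \<beta>)" for v
  have Dnn: "(0::rat) \<le> of_int D" using D by simp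
  have \<phi>Z: "\<phi> (Fv a) \<in> Z" if a: "a \<in> A" for a
  proof -
    have "\<phi> (Fv a) = (\<Sum>i<m. rsc (of_int D * \<alpha> i) (the_fin (a i)))"
      unfolding \<phi>_def Fv_def by (simp add: rsc_sum rsc_mult)
    moreover have "rsc (of_int D * \<alpha> i) (the_fin (a i)) \<in> Z" if i: "i < m" for i
    proof -
      have "a \<in> FI Z {..<m}" using a AZ by blast
      then have "a i \<in> Fin ` Z" using i unfolding FI_iff by blast
      then have "the_fin (a i) \<in> Z" by auto
      then show ?thesis using D(2) i rsc_Ints_Z by blast
    qed
    ultimately show ?thesis using Zsum[of "{..<m}" "\<lambda>i. rsc (of_int D * \<alpha> i) (the_fin (a i))"] by simp
  qed
  have \<phi>mono: "\<phi> v \<le> \<phi> w" if "v \<le> w" for v w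
    unfolding \<phi>_def using that by (intro rsc_mono[OF Dnn]) simp
  define K where "K = nat \<lceil>of_int D * (\<bar>\<alpha> k\<bar> * of_nat NN)\<rceil>"
  define c0 where "c0 = \<phi> Mv"
  have \<phi>W: "\<phi> (Mv + W) \<le> c0 + nmul K e"
  proof -
    have "\<phi> (Mv + W) = c0 + rsc (of_int D) W" unfolding \<phi>_def c0_def by (simp add: rsc_addx[symmetric] algebra_simps)
    moreover have "rsc (of_int D) W \<le> nmul K e"
    proof -
      have "rsc (of_int D) W = rsc (of_int D * (\<bar>\<alpha> k\<bar> * of_nat NN)) e" by (simp add: rsc_mult)
      also have "\<dots> \<le> rsc (of_nat K) e"
        unfolding K_def by (rule rsc_mono_r) (use epos of_nat_ceiling in auto)
      also have "\<dots> = nmul K e" by (rule rsc_nat)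
      finally show ?thesis .
    qed
    ultimately show ?thesis by simp
  qed
  define V where "V = {v. \<exists>a\<in>A. v = Fv a \<and> v \<le> Bv}"
  have Vsub: "V \<subseteq> (\<lambda>z. \<beta> + rsc (inverse (of_int D)) z) ` (Z \<inter> {c0 .. c0 + nmul K e})"
  proof
    fix v assume "v \<in> V"
    then obtain a where a: "a \<in> A" "v = Fv a" "v \<le> Bv" unfolding V_def by blast
    have z: "\<phi> v \<in> Z" using \<phi>Z a by simp
    have "c0 \<le> \<phi> v" unfolding c0_def using low[OF a(1)] a(2) \<phi>mono by simp
    moreover have "\<phi> v \<le> c0 + nmul K e"
    proof -
      have "v \<le> Mv + W" using a(3) Bv_le by (rule order_trans)
      then have "\<phi> v \<le> \<phi> (Mv + W)" by (rule \<phi>mono)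
      then show ?thesis using \<phi>W by (rule order_trans)
    qed
    moreover have "v = \<beta> + rsc (inverse (of_int D)) (\<phi> v)"
      unfolding \<phi>_def using D(1) rsc_inv[of "of_int D" "v - \<beta>"] by simp
    ultimately show "v \<in> (\<lambda>z. \<beta> + rsc (inverse (of_int D)) z) ` (Z \<inter> {c0 .. c0 + nmul K e})"
      using z by (intro image_eqI[where x="\<phi> v"]) simp_all
  qed
  have fV: "finite V" by (rule finite_subset[OF Vsub finite_imageI[OF finite_window]])
  have BvV: "Bv \<in> V" unfolding V_def Bv_def using bsA by blast
  define v0 where "v0 = Min V"
  have "v0 \<in> V" unfolding v0_def using fV BvV Min_in by blast
  then obtain a0 where a0: "a0 \<in> A" "v0 = Fv a0" unfolding V_def by blast
  have "f a0 \<le> f b" if b: "b \<in> A" for b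
  proof (cases "Fv b \<le> Bv")
    case True
    then have "Fv b \<in> V" unfolding V_def using b by blast
    then have "v0 \<le> Fv b" unfolding v0_def using fV by simp
    then show ?thesis using fF[OF a0(1)] fF[OF b] a0(2) by simp
  next
    case False
    have "v0 \<le> Bv" unfolding v0_def using fV BvV by simp
    then have "v0 \<le> Fv b" using False by simp
    then show ?thesis using fF[OF a0(1)] fF[OF b] a0(2) by simp
  qed
  then show ?thesis using a0(1) by blast
qed

end


lemma min_ind:
  fixes Z :: "'a::linordered_ab_group_add set" and e :: 'a
  shows "\<And>N A \<mu> \<nu> \<rho> (f :: (nat \<Rightarrow> 'a omega) \<Rightarrow> 'a omega) \<alpha> \<beta>. zgroup_hull Z e \<Longrightarrow> 1 \<le> m \<Longrightarrow> \<forall>i<m. 0 < N i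
    \<Longrightarrow> A \<subseteq> FI Z {..<m} \<Longrightarrow> lc_precell Z e m N A \<Longrightarrow> lc_pres Z e m N A \<mu> \<nu> \<rho>
    \<Longrightarrow> \<forall>a\<in>A. f a = Fin (\<beta> + (\<Sum>i<m. rsc (\<alpha> i) (the_fin (a i))))
    \<Longrightarrow> \<forall>p\<in>closure A - A. filterlim f (nhds PInf) (at p within A)
    \<Longrightarrow> A \<noteq> {} \<Longrightarrow> \<exists>a0\<in>A. \<forall>b\<in>A. f a0 \<le> f b"
proof (induction m)
  case 0 then show ?case by simp
next
  case (Suc k)
  interpret C: cellctx Z e "Suc k" k N A \<mu> \<nu> f \<rho> \<alpha> \<beta>
    by (unfold_locales) (use Suc.prems in auto)
  have Xne: "socle k A \<noteq> {}" using Suc.prems(9) unfolding socle_def by blast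
  obtain x0 where x0: "x0 \<in> socle k A" "\<forall>x\<in>socle k A. C.fhat x0 \<le> C.fhat x"
  proof (cases k)
    case 0
    obtain x0 where x0: "x0 \<in> socle k A" using Xne by blast
    have "x = x0" if "x \<in> socle k A" for x
      using that x0 0 unfolding socle_def trunc_def by auto
    then show ?thesis using that x0 by blast
  next
    case (Suc k')
    have pc: "lc_precell Z e k N (socle k A)" using Suc.prems(5) by simp
    then obtain \<mu>' \<nu>' \<rho>' where pr: "lc_pres Z e k N (socle k A) \<mu>' \<nu>' \<rho>'" using Suc by auto
    obtain \<beta>' \<alpha>' where rep: "\<forall>x\<in>socle k A. C.fhat x = Fin (\<beta>' + (\<Sum>i<k. rsc (\<alpha>' i) (the_fin (x i))))"
      using C.fhat_repr[OF Xne] by blast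
    have "\<exists>a0\<in>socle k A. \<forall>b\<in>socle k A. C.fhat a0 \<le> C.fhat b"
    proof (rule Suc.IH[OF Suc.prems(1) _ _ C.X_sub pc pr rep C.fhat_finf Xne])
      show "1 \<le> k" using Suc by simp
      show "\<forall>i<k. 0 < N i" using Suc.prems(3) by simp
    qed
    then show ?thesis using that by blast
  qed
  show ?case by (rule C.min_from[OF x0])
qed

theorem lemma4p2:
  fixes Z :: "'a::linordered_ab_group_add set" and e :: 'a
    and m :: nat and N :: "nat \<Rightarrow> nat"
    and A :: "(nat \<Rightarrow> 'a omega) set"
    and \<mu> \<nu> f :: "(nat \<Rightarrow> 'a omega) \<Rightarrow> 'a omega" and \<rho> :: nat
    and \<alpha> :: "nat \<Rightarrow> rat" and \<beta> :: 'a
  assumes hull: "zgroup_hull Z e"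
    and m: "1 \<le> m"
    and Npos: "\<forall>i<m. 0 < N i"
    and AZ: "A \<subseteq> FI Z {..<m}"
    and precell: "lc_precell Z e m N A"
    and pres: "lc_pres Z e m N A \<mu> \<nu> \<rho>"
    and f_aff: "is_affine Z {..<m} A f"
    and f_lc: "lcont A f"
    and f_bd: "\<forall>h. continuous_on (closure A) h \<and> (\<forall>a\<in>A. h a = f a)
                 \<longrightarrow> (\<forall>p\<in>pfrontier A. h p = PInf)"
    and f_eq: "\<forall>a\<in>A. f a = Fin (\<beta> + (\<Sum>i<m. rsc (\<alpha> i) (the_fin (a i))))"
  shows
    "let X = socle (m - 1) A;
         fhat = (\<lambda>x. Fin (\<beta> + (\<Sum>i<m - 1. rsc (\<alpha> i) (the_fin (x i)))
                    + rsc (\<alpha> (m - 1))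
                        (the_fin (if 0 \<le> \<alpha> (m - 1) then \<mu> x else \<nu> x))))
     in (\<forall>x\<in>X. (if 0 \<le> \<alpha> (m - 1) then \<mu> x else \<nu> x) \<noteq> PInf)
      \<and> is_affine Z {..<m - 1} X fhat \<and> lcont X fhat
      \<and> (\<forall>p\<in>pfrontier X. filterlim fhat (nhds PInf) (at p within X))
      \<and> (\<forall>a\<in>A. \<exists>a0\<in>A. (\<forall>b\<in>A. f a0 \<le> f b)
            \<and> Fin (the_fin (f a0) - rsc (\<bar>\<alpha> (m - 1)\<bar> * of_nat (N (m - 1))) e)
                 \<le> fhat (trunc (m - 1) a)
            \<and> fhat (trunc (m - 1) a) \<le> f a)"
proof -
  define k where "k = m - 1"
  have mk: "m = Suc k" using m k_def by simp
  obtain h where h: "continuous_on (closure A) h" "\<forall>a\<in>A. h a = f a" using f_lc unfolding lcont_def by blast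
  have finf: "\<forall>p\<in>closure A - A. filterlim f (nhds PInf) (at p within A)"
  proof
    fix p assume p: "p \<in> closure A - A"
    have "p \<in> pfrontier A" unfolding pfrontier_def using p closure_subset by blast
    then have hp: "h p = PInf" using f_bd h by blast
    have "(h \<longlongrightarrow> h p) (at p within closure A)" using h(1) p unfolding continuous_on_def by blast
    then have 1: "(h \<longlongrightarrow> h p) (at p within A)" by (rule tendsto_within_subset) (rule closure_subset)
    have 2: "eventually (\<lambda>x. h x = f x) (at p within A)"
      unfolding eventually_at_filter using h(2) by simp
    show "filterlim f (nhds PInf) (at p within A)" using 1 tendsto_cong[OF 2] hp by simp
  qed
  interpret C: cellctx Z e m k N A \<mu> \<nu> f \<rho> \<alpha> \<beta>
    by (unfold_locales) (use hull mk Npos AZ pres f_eq finf in auto)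
  show ?thesis
    unfolding Let_def k_def[symmetric]
  proof (intro conjI ballI)
    fix x assume "x \<in> socle k A"
    then show "(if 0 \<le> \<alpha> k then \<mu> x else \<nu> x) \<noteq> PInf" by (rule C.bnd_fin)
  next
    show "is_affine Z {..<k} (socle k A) C.fhat" by (rule C.fhat_affine)
  next
    show "lcont (socle k A) C.fhat" by (rule C.fhat_lcont)
  next
    fix p assume "p \<in> pfrontier (socle k A)"
    then show "filterlim C.fhat (nhds PInf) (at p within socle k A)" using C.fhat_front by blast
  next
    fix a assume a: "a \<in> A"
    obtain a0 where a0: "a0 \<in> A" "\<forall>b\<in>A. f a0 \<le> f b"
      using min_ind[OF hull m Npos AZ precell pres f_eq finf] a by blast
    show "\<exists>a0\<in>A. (\<forall>b\<in>A. f a0 \<le> f b)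
            \<and> Fin (the_fin (f a0) - rsc (\<bar>\<alpha> k\<bar> * of_nat (N k)) e) \<le> C.fhat (trunc k a)
            \<and> C.fhat (trunc k a) \<le> f a"
      using a0 C.lower_bound[OF a a0] C.fhat_le[OF a] by blast
  qed
qed


end
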